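(* Let $\mathcal{A}$ and $\mathcal{B}$ be unital complex algebras with faithful and regular Sylvester rank functions $\mathrm{rk}_{\mathcal{A}}$ and $\mathrm{rk}_{\mathcal{B}}$. Let $X=(X_1,\dots,X_d)\in\mathcal{A}^d$ and $Y=(Y_1,\dots,Y_d)\in\mathcal{B}^d$ be such that for any matrix $A$ over $\mathbb{C}\langle x_1,\dots,x_d\rangle$, $$\mathrm{rk}_{\mathcal{B}}(A(Y))\le\mathrm{rk}_{\mathcal{A}}(A(X)).$$ Then: (1) there is a unique specialization from the rational closure $\mathcal{A}_X$ to the rational closure $\mathcal{B}_Y$; (2) for any rational expression $R$ in $x_1,\dots,x_d$ such that $R(Y)$ is well-defined, $R(X)$ is also well-defined and $\mathrm{rk}_{\mathcal{B}}(R(Y))\le\mathrm{rk}_{\mathcal{A}}(R(X))$.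
   Context: A Sylvester rank function on a unital complex algebra $\mathcal{A}$ is a function $\mathrm{rk}$ from rectangular matrices over $\mathcal{A}$ to $[0,\infty)$ with: $\mathrm{rk}(0)=0$, $\mathrm{rk}(1)=1$; $\mathrm{rk}(AB)\le\min(\mathrm{rk}A,\mathrm{rk}B)$; $\mathrm{rk}(A\oplus B)=\mathrm{rk}A+\mathrm{rk}B$; $\mathrm{rk}\begin{pmatrix}A&C\\0&B\end{pmatrix}\ge\mathrm{rk}A+\mathrm{rk}B$. It is faithful if $\mathrm{rk}(A)>0$ for all nonzero $A$, and regular if every $A\in M_n(\mathcal{A})$ with $\mathrm{rk}(A)=n$ is invertible. A $\mathbb{C}\langle x_1,\dots,x_d\rangle$-algebra is a unital algebra $\mathcal{C}$ with a homomorphism $\phi:\mathbb{C}\langle x_1,\dots,x_d\rangle\to\mathcal{C}$; $\Sigma_\phi$ is the set of square matrices $A$ over $\mathbb{C}\langle x_1,\dots,x_d\rangle$ (of any size $n$) with $\phi(A)$ invertible in $M_n(\mathcal{C})$; for a tuple $X$ in $\mathcal{C}$ with $\phi(P)=P(X)$ write $\Sigma_X$. The rational closure $\mathcal{A}_X$ is the set of all entries of $A(X)^{-1}$, $A\in\Sigma_X$; it is a subalgebra containing the algebra generated by $X$, regarded as a $\mathbb{C}\langle x\rangle$-algebra via $P\mapsto P(X)$. A subhomomorphism from a $\mathbb{C}\langle x\rangle$-algebra $(\mathcal{C},\phi_{\mathcal{C}})$ to $(\mathcal{D},\phi_{\mathcal{D}})$ is a homomorphism $f:\mathcal{C}_f\to\mathcal{D}$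 defined on a subalgebra $\mathcal{C}_f\supseteq\phi_{\mathcal{C}}(\mathbb{C}\langle x\rangle)$, with structure map $\phi_f=\phi_{\mathcal{C}}$, such that $f\circ\phi_f=\phi_{\mathcal{D}}$ and $\Sigma_{\phi_{\mathcal{D}}}\subseteq\Sigma_{\phi_f}$. Two subhomomorphisms are equivalent if they agree on a subalgebra on which their common restriction is again a subhomomorphism; a specialization is an equivalence class. Rational expressions (combinations of scalars and $x_i$ via $+,\cdot,{}^{-1}$, parentheses) are evaluated recursively in an algebra, an inverse being defined only where the argument is invertible; "well-defined" means $X$ lies in the domain. *)

theory Defs
  imports Complex_Main "Jordan_Normal_Form.Matrix"
begin

text \<open>A unital complex algebra is modelled as a type of class ring_1 together with
  a unital ring homomorphism from the complex numbers into its centre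
  (scalar multiplication c a is emb c * a).\<close>

definition complex_alg :: "(complex \<Rightarrow> 'a::ring_1) \<Rightarrow> bool" where
  "complex_alg emb \<longleftrightarrow>
     emb 1 = 1 \<and> (\<forall>c e. emb (c + e) = emb c + emb e) \<and>
     (\<forall>c e. emb (c * e) = emb c * emb e) \<and> (\<forall>c a. emb c * a = a * emb c)"

definition sylvester_rank :: "('a::ring_1 mat \<Rightarrow> real) \<Rightarrow> bool" where
  "sylvester_rank rk \<longleftrightarrow>
     (\<forall>A. rk A \<ge> 0) \<and>
     (\<forall>m n. rk (0\<^sub>m m n) = 0) \<and>
     rk (1\<^sub>m 1) = 1 \<and>
     (\<forall>A B. dim_col A = dim_row B \<longrightarrow> rk (A * B) \<le> min (rk A) (rk B)) \<and>
     (\<forall>A B. rk (four_block_mat A (0\<^sub>m (dim_row A) (dim_col B)) (0\<^sub>m (dim_row B) (dim_col A)) B)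
             = rk A + rk B) \<and>
     (\<forall>A B C. dim_row C = dim_row A \<longrightarrow> dim_col C = dim_col B \<longrightarrow>
        rk (four_block_mat A C (0\<^sub>m (dim_row B) (dim_col A)) B) \<ge> rk A + rk B)"

definition faithful_rank :: "('a::ring_1 mat \<Rightarrow> real) \<Rightarrow> bool" where
  "faithful_rank rk \<longleftrightarrow> (\<forall>A. A \<noteq> 0\<^sub>m (dim_row A) (dim_col A) \<longrightarrow> rk A > 0)"

definition regular_rank :: "('a::ring_1 mat \<Rightarrow> real) \<Rightarrow> bool" where
  "regular_rank rk \<longleftrightarrow>
     (\<forall>A n. A \<in> carrier_mat n n \<longrightarrow> rk A = real n \<longrightarrow> invertible_mat A)"

text \<open>Variables are indexed from 0, so x_1,...,x_d correspond to Var 0, ..., Var (d-1).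
  Every element of the free algebra is represented by some term; only evaluations
  of terms occur in the statement, so this representation is faithful.\<close>

datatype ncpoly = PConst complex | PVar nat | PAdd ncpoly ncpoly | PMul ncpoly ncpoly

fun pvars :: "ncpoly \<Rightarrow> nat set" where
  "pvars (PConst c) = {}"
| "pvars (PVar i) = {i}"
| "pvars (PAdd p q) = pvars p \<union> pvars q"
| "pvars (PMul p q) = pvars p \<union> pvars q"

fun peval :: "(complex \<Rightarrow> 'a::ring_1) \<Rightarrow> (nat \<Rightarrow> 'a) \<Rightarrow> ncpoly \<Rightarrow> 'a" where
  "peval emb X (PConst c) = emb c"
| "peval emb X (PVar i) = X i"
| "peval emb X (PAdd p q) = peval emb X p + peval emb X q"
| "peval emb X (PMul p q) = peval emb X p * peval emb X q"

definition is_poly :: "nat \<Rightarrow> ncpoly \<Rightarrow> bool" where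
  "is_poly d p \<longleftrightarrow> pvars p \<subseteq> {..<d}"

definition is_poly_mat :: "nat \<Rightarrow> ncpoly mat \<Rightarrow> bool" where
  "is_poly_mat d A \<longleftrightarrow> (\<forall>i<dim_row A. \<forall>j<dim_col A. is_poly d (A $$ (i, j)))"

definition mat_eval :: "(complex \<Rightarrow> 'a::ring_1) \<Rightarrow> (nat \<Rightarrow> 'a) \<Rightarrow> ncpoly mat \<Rightarrow> 'a mat" where
  "mat_eval emb X A = map_mat (peval emb X) A"

definition entries_in :: "'a set \<Rightarrow> 'a mat \<Rightarrow> bool" where
  "entries_in S M \<longleftrightarrow> (\<forall>i<dim_row M. \<forall>j<dim_col M. M $$ (i, j) \<in> S)"

definition inv_in :: "'a::ring_1 set \<Rightarrow> 'a mat \<Rightarrow> bool" where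
  "inv_in S M \<longleftrightarrow> (\<exists>n N. M \<in> carrier_mat n n \<and> N \<in> carrier_mat n n \<and> entries_in S N \<and>
                      M * N = 1\<^sub>m n \<and> N * M = 1\<^sub>m n)"

definition Sigma :: "nat \<Rightarrow> (complex \<Rightarrow> 'a::ring_1) \<Rightarrow> (nat \<Rightarrow> 'a) \<Rightarrow> 'a set \<Rightarrow> ncpoly mat set" where
  "Sigma d emb X S = {A. is_poly_mat d A \<and> square_mat A \<and> inv_in S (mat_eval emb X A)}"

definition rat_closure :: "nat \<Rightarrow> (complex \<Rightarrow> 'a::ring_1) \<Rightarrow> (nat \<Rightarrow> 'a) \<Rightarrow> 'a set" where
  "rat_closure d emb X =
     {N $$ (i, j) | A N n i j. A \<in> Sigma d emb X UNIV \<and> A \<in> carrier_mat n n \<and>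
        N \<in> carrier_mat n n \<and> mat_eval emb X A * N = 1\<^sub>m n \<and> N * mat_eval emb X A = 1\<^sub>m n \<and>
        i < n \<and> j < n}"

definition subalgebra :: "(complex \<Rightarrow> 'a::ring_1) \<Rightarrow> 'a set \<Rightarrow> bool" where
  "subalgebra emb S \<longleftrightarrow> 1 \<in> S \<and> (\<forall>a\<in>S. \<forall>b\<in>S. a + b \<in> S \<and> a * b \<in> S) \<and>
     (\<forall>c. \<forall>a\<in>S. emb c * a \<in> S)"

definition alg_hom_on ::
  "(complex \<Rightarrow> 'a::ring_1) \<Rightarrow> (complex \<Rightarrow> 'b::ring_1) \<Rightarrow> 'a set \<Rightarrow> ('a \<Rightarrow> 'b) \<Rightarrow> bool" where
  "alg_hom_on embA embB S f \<longleftrightarrow> f 1 = 1 \<and>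
     (\<forall>a\<in>S. \<forall>b\<in>S. f (a + b) = f a + f b \<and> f (a * b) = f a * f b) \<and>
     (\<forall>c. \<forall>a\<in>S. f (embA c * a) = embB c * f a)"

definition subhom ::
  "nat \<Rightarrow> (complex \<Rightarrow> 'a::ring_1) \<Rightarrow> (nat \<Rightarrow> 'a) \<Rightarrow> (complex \<Rightarrow> 'b::ring_1) \<Rightarrow> (nat \<Rightarrow> 'b)
     \<Rightarrow> 'a set \<Rightarrow> ('a \<Rightarrow> 'b) \<Rightarrow> bool" where
  "subhom d embA X embB Y S f \<longleftrightarrow>
     subalgebra embA S \<and> S \<subseteq> rat_closure d embA X \<and>
     (\<forall>p. is_poly d p \<longrightarrow> peval embA X p \<in> S) \<and>
     alg_hom_on embA embB S f \<and> f ` S \<subseteq> rat_closure d embB Y \<and>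
     (\<forall>p. is_poly d p \<longrightarrow> f (peval embA X p) = peval embB Y p) \<and>
     Sigma d embB Y (rat_closure d embB Y) \<subseteq> Sigma d embA X S"

definition subhom_equiv ::
  "nat \<Rightarrow> (complex \<Rightarrow> 'a::ring_1) \<Rightarrow> (nat \<Rightarrow> 'a) \<Rightarrow> (complex \<Rightarrow> 'b::ring_1) \<Rightarrow> (nat \<Rightarrow> 'b)
     \<Rightarrow> 'a set \<Rightarrow> ('a \<Rightarrow> 'b) \<Rightarrow> 'a set \<Rightarrow> ('a \<Rightarrow> 'b) \<Rightarrow> bool" where
  "subhom_equiv d embA X embB Y S f T g \<longleftrightarrow>
     (\<exists>U. U \<subseteq> S \<inter> T \<and> (\<forall>u\<in>U. f u = g u) \<and> subhom d embA X embB Y U f)"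

definition unique_specialization ::
  "nat \<Rightarrow> (complex \<Rightarrow> 'a::ring_1) \<Rightarrow> (nat \<Rightarrow> 'a) \<Rightarrow> (complex \<Rightarrow> 'b::ring_1) \<Rightarrow> (nat \<Rightarrow> 'b) \<Rightarrow> bool" where
  "unique_specialization d embA X embB Y \<longleftrightarrow>
     (\<exists>S f. subhom d embA X embB Y S f) \<and>
     (\<forall>S f T g. subhom d embA X embB Y S f \<longrightarrow> subhom d embA X embB Y T g \<longrightarrow>
        subhom_equiv d embA X embB Y S f T g)"

datatype ratexp = RConst complex | RVar nat | RAdd ratexp ratexp | RMul ratexp ratexp | RInv ratexp

fun rvars :: "ratexp \<Rightarrow> nat set" where
  "rvars (RConst c) = {}"
| "rvars (RVar i) = {i}"
| "rvars (RAdd p q) = rvars p \<union> rvars q"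
| "rvars (RMul p q) = rvars p \<union> rvars q"
| "rvars (RInv p) = rvars p"

text \<open>Recursive evaluation; None means "not well-defined".\<close>
fun reval :: "(complex \<Rightarrow> 'a::ring_1) \<Rightarrow> (nat \<Rightarrow> 'a) \<Rightarrow> ratexp \<Rightarrow> 'a option" where
  "reval emb X (RConst c) = Some (emb c)"
| "reval emb X (RVar i) = Some (X i)"
| "reval emb X (RAdd p q) =
     (case (reval emb X p, reval emb X q) of (Some a, Some b) \<Rightarrow> Some (a + b) | _ \<Rightarrow> None)"
| "reval emb X (RMul p q) =
     (case (reval emb X p, reval emb X q) of (Some a, Some b) \<Rightarrow> Some (a * b) | _ \<Rightarrow> None)"
| "reval emb X (RInv p) =
     (case reval emb X p of Some a \<Rightarrow> (if (\<exists>b. a * b = 1 \<and> b * a = 1)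
                                          then Some (THE b. a * b = 1 \<and> b * a = 1) else None)
                        | None \<Rightarrow> None)"

definition mat1 :: "'a \<Rightarrow> 'a mat" where
  "mat1 a = mat 1 1 (\<lambda>_. a)"

end

theory Submission
  imports Defs
begin



definition minv :: "nat \<Rightarrow> 'a::ring_1 mat \<Rightarrow> 'a mat \<Rightarrow> bool" where
  "minv n A N \<longleftrightarrow> A \<in> carrier_mat n n \<and> N \<in> carrier_mat n n \<and> A * N = 1\<^sub>m n \<and> N * A = 1\<^sub>m n"

lemma inv_cancel:
  fixes A :: "'a::ring_1 mat"
  assumes "A \<in> carrier_mat n n" "B \<in> carrier_mat n n" "B * A = 1\<^sub>m n" "dim_row X = n"
  shows "B * (A * X) = X"
proof -
  have X: "X \<in> carrier_mat n (dim_col X)" using assms(4) by auto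
  have "B * (A * X) = (B * A) * X" using assoc_mult_mat[OF assms(2) assms(1) X] by simp
  thus ?thesis using assms X by simp
qed

lemma assoc_dim:
  fixes A :: "'a::semiring_0 mat"
  shows "dim_col A = dim_row B \<Longrightarrow> dim_col B = dim_row C \<Longrightarrow> (A * B) * C = A * (B * C)"
  by (rule assoc_mult_mat[of _ "dim_row A" "dim_col A" _ "dim_col B" _ "dim_col C"]) auto

lemma minv_unique:
  assumes "minv n A N" "N' \<in> carrier_mat n n" "A * N' = 1\<^sub>m n"
  shows "N' = N"
proof -
  have c: "A \<in> carrier_mat n n" "N \<in> carrier_mat n n" "N * A = 1\<^sub>m n" using assms(1) unfolding minv_def by auto
  have "N * (A * N') = N'" by (rule inv_cancel[OF c(1,2,3)]) (use assms in auto)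
  hence "N * 1\<^sub>m n = N'" using assms(3) by simp
  thus ?thesis using c by simp
qed

lemma minv_sym: "minv n A N \<Longrightarrow> minv n N A" unfolding minv_def by auto

lemma minv_one: "minv n (1\<^sub>m n) (1\<^sub>m n)" unfolding minv_def by auto

lemma minv_ut:
  assumes P: "minv n1 P P'" and Q: "minv n2 Q Q'" and R: "R \<in> carrier_mat n1 n2"
  shows "minv (n1+n2) (four_block_mat P R (0\<^sub>m n2 n1) Q)
     (four_block_mat P' (- (P' * R * Q')) (0\<^sub>m n2 n1) Q')"
proof -
  have c: "P \<in> carrier_mat n1 n1" "P' \<in> carrier_mat n1 n1" "P * P' = 1\<^sub>m n1" "P' * P = 1\<^sub>m n1"
    "Q \<in> carrier_mat n2 n2" "Q' \<in> carrier_mat n2 n2" "Q * Q' = 1\<^sub>m n2" "Q' * Q = 1\<^sub>m n2"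
    using P Q unfolding minv_def by auto
  note cP = inv_cancel[OF c(2,1,3)] and cQ = inv_cancel[OF c(5,6,8)]
  have m1: "four_block_mat P R (0\<^sub>m n2 n1) Q * four_block_mat P' (- (P' * R * Q')) (0\<^sub>m n2 n1) Q'
     = 1\<^sub>m (n1+n2)"
    apply (subst mult_four_block_mat[of _ n1 n1 _ n2 _ n2 _ _ n1 _ n2])
    using c R cP by (auto simp: four_block_one_mat[symmetric] simp del: four_block_one_mat)
  have e2: "P' * (R * Q') * Q = P' * R"
  proof -
    have "P' * (R * Q') * Q = P' * ((R * Q') * Q)" by (rule assoc_mult_mat[of _ n1 n1 _ n2 _ n2]) (use c R in auto)
    also have "(R * Q') * Q = R" using c R by simp
    finally show ?thesis .
  qed
  have m2: "four_block_mat P' (- (P' * R * Q')) (0\<^sub>m n2 n1) Q' * four_block_mat P R (0\<^sub>m n2 n1) Q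
     = 1\<^sub>m (n1+n2)"
    apply (subst mult_four_block_mat[of _ n1 n1 _ n2 _ n2 _ _ n1 _ n2])
    using c R cQ e2 by (auto simp: four_block_one_mat[symmetric] simp del: four_block_one_mat)
  show ?thesis unfolding minv_def using m1 m2 c R by auto
qed

lemma minv_lt:
  assumes P: "minv n1 P P'" and Q: "minv n2 Q Q'" and R: "R \<in> carrier_mat n2 n1"
  shows "minv (n1+n2) (four_block_mat P (0\<^sub>m n1 n2) R Q)
     (four_block_mat P' (0\<^sub>m n1 n2) (- (Q' * R * P')) Q')"
proof -
  have c: "P \<in> carrier_mat n1 n1" "P' \<in> carrier_mat n1 n1" "P * P' = 1\<^sub>m n1" "P' * P = 1\<^sub>m n1"
    "Q \<in> carrier_mat n2 n2" "Q' \<in> carrier_mat n2 n2" "Q * Q' = 1\<^sub>m n2" "Q' * Q = 1\<^sub>m n2"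
    using P Q unfolding minv_def by auto
  note cP = inv_cancel[OF c(2,1,3)] and cQ = inv_cancel[OF c(6,5,7)]
  have e2: "Q' * (R * P') * P = Q' * R"
  proof -
    have "Q' * (R * P') * P = Q' * ((R * P') * P)" by (rule assoc_mult_mat[of _ n2 n2 _ n1 _ n1]) (use c R in auto)
    also have "(R * P') * P = R" using c R by simp
    finally show ?thesis .
  qed
  have m1: "four_block_mat P (0\<^sub>m n1 n2) R Q * four_block_mat P' (0\<^sub>m n1 n2) (- (Q' * R * P')) Q'
     = 1\<^sub>m (n1+n2)"
    apply (subst mult_four_block_mat[of _ n1 n1 _ n2 _ n2 _ _ n1 _ n2])
    using c R cQ by (auto simp: four_block_one_mat[symmetric] simp del: four_block_one_mat)
  have m2: "four_block_mat P' (0\<^sub>m n1 n2) (- (Q' * R * P')) Q' * four_block_mat P (0\<^sub>m n1 n2) R Q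
     = 1\<^sub>m (n1+n2)"
    apply (subst mult_four_block_mat[of _ n1 n1 _ n2 _ n2 _ _ n1 _ n2])
    using c R e2 by (auto simp: four_block_one_mat[symmetric] simp del: four_block_one_mat)
  show ?thesis unfolding minv_def using m1 m2 c R by auto
qed

lemma minv_conj:
  assumes P: "minv n P P'" and Q: "minv n Q Q'" and C: "C \<in> carrier_mat n n"
    and D: "minv n D D'" and eq: "P * C * Q = D"
  shows "minv n C (Q * D' * P)"
proof -
  have c: "P \<in> carrier_mat n n" "P' \<in> carrier_mat n n" "P * P' = 1\<^sub>m n" "P' * P = 1\<^sub>m n"
    "Q \<in> carrier_mat n n" "Q' \<in> carrier_mat n n" "Q * Q' = 1\<^sub>m n" "Q' * Q = 1\<^sub>m n"
    "D \<in> carrier_mat n n" "D' \<in> carrier_mat n n" "D * D' = 1\<^sub>m n" "D' * D = 1\<^sub>m n"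
    using P Q D unfolding minv_def by auto
  note cP = inv_cancel[OF c(2,1,3)] and cP' = inv_cancel[OF c(1,2,4)]
    and cQ = inv_cancel[OF c(6,5,7)] and cQ' = inv_cancel[OF c(5,6,8)]
    and cD = inv_cancel[OF c(10,9,11)] and cD' = inv_cancel[OF c(9,10,12)]
  have "P * C * Q * Q' = P * C * (Q * Q')" by (rule assoc_mult_mat) (use c C in auto)
  hence "D * Q' = P * C" unfolding eq using c C by simp
  hence "P' * (D * Q') = C" using c C cP' by simp
  hence Ce: "C = P' * (D * Q')" by simp
  note dims = c(1,2,5,6,9,10)[THEN carrier_matD(1)] c(1,2,5,6,9,10)[THEN carrier_matD(2)]
  have m1: "C * (Q * D' * P) = 1\<^sub>m n" unfolding Ce using c cQ' cD dims by (simp add: assoc_dim)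
  have m2: "(Q * D' * P) * C = 1\<^sub>m n" unfolding Ce using c cP cD' dims by (simp add: assoc_dim)
  show ?thesis unfolding minv_def using m1 m2 c C by auto
qed

definition bord :: "'a::zero mat \<Rightarrow> 'a mat \<Rightarrow> 'a mat \<Rightarrow> 'a mat" where
  "bord A b c = four_block_mat A b c (0\<^sub>m 1 1)"

lemma border_factor:
  assumes AN: "minv n A N" and b: "b \<in> carrier_mat n 1" and c: "c \<in> carrier_mat 1 n"
  shows "four_block_mat (1\<^sub>m n) (0\<^sub>m n 1) (- (c * N)) (1\<^sub>m 1) * bord A b c
       * four_block_mat (1\<^sub>m n) (- (N * b)) (0\<^sub>m 1 n) (1\<^sub>m 1)
       = four_block_mat A (0\<^sub>m n 1) (0\<^sub>m 1 n) (- (c * N * b))"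
proof -
  have cc: "A \<in> carrier_mat n n" "N \<in> carrier_mat n n" "A * N = 1\<^sub>m n" "N * A = 1\<^sub>m n"
    using AN unfolding minv_def by auto
  note cA = inv_cancel[OF cc(2,1,3)] and cN = inv_cancel[OF cc(1,2,4)]
  have e1: "c * N * A = c" using cc c by simp
  have s1: "four_block_mat (1\<^sub>m n) (0\<^sub>m n 1) (- (c * N)) (1\<^sub>m 1) * bord A b c
     = four_block_mat A b (0\<^sub>m 1 n) (- (c * N * b))"
    unfolding bord_def
    apply (subst mult_four_block_mat[of _ n n _ 1 _ 1 _ _ n _ 1])
    using cc b c e1 by auto
  show ?thesis unfolding s1
    apply (subst mult_four_block_mat[of _ n n _ 1 _ 1 _ _ n _ 1])
    using cc b c cA by auto
qed

context
  fixes rk :: "'a::ring_1 mat \<Rightarrow> real"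
  assumes rk: "sylvester_rank rk"
begin

lemma rk_mult1: "dim_col A = dim_row B \<Longrightarrow> rk (A * B) \<le> rk A"
  using rk unfolding sylvester_rank_def by fastforce

lemma rk_mult2: "dim_col A = dim_row B \<Longrightarrow> rk (A * B) \<le> rk B"
  using rk unfolding sylvester_rank_def by fastforce

lemma rk_diag: "rk (four_block_mat A (0\<^sub>m (dim_row A) (dim_col B)) (0\<^sub>m (dim_row B) (dim_col A)) B) = rk A + rk B"
  using rk unfolding sylvester_rank_def by blast

lemma rk_zero: "rk (0\<^sub>m m n) = 0"
  using rk unfolding sylvester_rank_def by blast

lemma rk_one1: "rk (1\<^sub>m 1) = 1"
  using rk unfolding sylvester_rank_def by blast

lemma rk_one: "rk (1\<^sub>m n) = real n"
proof (induction n)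
  case 0
  have "(1\<^sub>m 0 :: 'a mat) = 0\<^sub>m 0 0" by (rule eq_matI) auto
  thus ?case using rk_zero by simp
next
  case (Suc n)
  have "(1\<^sub>m (Suc n) :: 'a mat) = four_block_mat (1\<^sub>m n) (0\<^sub>m n 1) (0\<^sub>m 1 n) (1\<^sub>m 1)"
    using four_block_one_mat[of n 1] by simp
  also have "rk \<dots> = rk (1\<^sub>m n) + rk (1\<^sub>m 1)" using rk_diag[of "1\<^sub>m n" "1\<^sub>m 1"] by simp
  finally show ?case using Suc rk_one1 by simp
qed

lemma rk_le_rows: "A \<in> carrier_mat n m \<Longrightarrow> rk A \<le> real n"
  using rk_mult1[of "1\<^sub>m n" A] rk_one[of n] by auto

lemma rk_minv: "minv n A N \<Longrightarrow> rk A = real n"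
  unfolding minv_def using rk_mult1[of A N] rk_le_rows[of A n n] rk_one[of n] by auto

lemma rk_conj:
  assumes P: "minv n P P'" and Q: "minv m Q Q'" and C: "C \<in> carrier_mat n m"
  shows "rk (P * C * Q) = rk C"
proof -
  have c: "P \<in> carrier_mat n n" "P' \<in> carrier_mat n n" "P' * P = 1\<^sub>m n"
    "Q \<in> carrier_mat m m" "Q' \<in> carrier_mat m m" "Q * Q' = 1\<^sub>m m"
    using P Q unfolding minv_def by auto
  have le1: "rk (P * C * Q) \<le> rk C"
    using rk_mult1[of "P * C" Q] rk_mult2[of P C] c C by fastforce
  have "P' * (P * C * Q) * Q' = C"
  proof -
    have "P' * (P * C * Q) * Q' = P' * (P * (C * (Q * Q')))" using c C by (simp add: assoc_dim)
    also have "\<dots> = C" using c C inv_cancel[OF c(1,2,3)] by simp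
    finally show ?thesis .
  qed
  moreover have "rk (P' * (P * C * Q) * Q') \<le> rk (P * C * Q)"
    using rk_mult1[of "P' * (P * C * Q)" Q'] rk_mult2[of P' "P * C * Q"] c C by fastforce
  ultimately show ?thesis using le1 by simp
qed

lemma rk_uminus:
  assumes C: "C \<in> carrier_mat n m"
  shows "rk (- C) = rk C"
proof -
  have "minv n (- 1\<^sub>m n) (- 1\<^sub>m n)" unfolding minv_def by auto
  moreover have "- 1\<^sub>m n * C * 1\<^sub>m m = - C" using C by auto
  ultimately show ?thesis using rk_conj[of n "- 1\<^sub>m n" "- 1\<^sub>m n" m "1\<^sub>m m" "1\<^sub>m m" C] minv_one C by auto
qed

lemma rk_border:
  assumes AN: "minv n A N" and b: "b \<in> carrier_mat n 1" and c: "c \<in> carrier_mat 1 n"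
  shows "rk (bord A b c) = real n + rk (c * N * b)"
proof -
  have cc: "A \<in> carrier_mat n n" "N \<in> carrier_mat n n" using AN unfolding minv_def by auto
  have P: "minv (n+1) (four_block_mat (1\<^sub>m n) (0\<^sub>m n 1) (- (c * N)) (1\<^sub>m 1)) 
     (four_block_mat (1\<^sub>m n) (0\<^sub>m n 1) (- (1\<^sub>m 1 * - (c * N) * 1\<^sub>m n)) (1\<^sub>m 1))"
    by (rule minv_lt[OF minv_one minv_one]) (use cc c in auto)
  have Q: "minv (n+1) (four_block_mat (1\<^sub>m n) (- (N * b)) (0\<^sub>m 1 n) (1\<^sub>m 1))
     (four_block_mat (1\<^sub>m n) (- (1\<^sub>m n * - (N * b) * 1\<^sub>m 1)) (0\<^sub>m 1 n) (1\<^sub>m 1))"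
    by (rule minv_ut[OF minv_one minv_one]) (use cc b in auto)
  have C: "bord A b c \<in> carrier_mat (n+1) (n+1)" unfolding bord_def using cc b c by auto
  have "rk (bord A b c) = rk (four_block_mat A (0\<^sub>m n 1) (0\<^sub>m 1 n) (- (c * N * b)))"
    using rk_conj[OF P Q C] border_factor[OF AN b c] by simp
  also have "\<dots> = rk A + rk (- (c * N * b))"
    using rk_diag[of A "- (c * N * b)"] cc b c by simp
  also have "\<dots> = real n + rk (c * N * b)"
    using rk_minv[OF AN] rk_uminus[of "c * N * b" 1 1] cc b c by simp
  finally show ?thesis .
qed



end

lemma mat1_carrier[simp]: "mat1 a \<in> carrier_mat 1 1"
  unfolding mat1_def by auto
lemma mat1_dims[simp]: "dim_row (mat1 a) = 1" "dim_col (mat1 a) = 1"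
  unfolding mat1_def by auto
lemma mat1_index[simp]: "mat1 a $$ (0,0) = a"
  unfolding mat1_def by auto
lemma mat1_mult: "mat1 (a::'a::semiring_0) * mat1 b = mat1 (a * b)"
  unfolding mat1_def by (rule eq_matI) (auto simp: scalar_prod_def)
lemma mat1_add: "mat1 (a::'a::monoid_add) + mat1 b = mat1 (a + b)"
  unfolding mat1_def by (rule eq_matI) auto
lemma mat1_uminus: "- mat1 (a::'a::group_add) = mat1 (- a)"
  unfolding mat1_def by (rule eq_matI) auto
lemma mat1_eq_iff: "mat1 a = mat1 b \<longleftrightarrow> a = b"
  by (metis mat1_index)
lemma mat1_of: "M \<in> carrier_mat 1 1 \<Longrightarrow> M = mat1 (M $$ (0,0))"
  unfolding mat1_def by (rule eq_matI) auto
lemma mat1_one: "1\<^sub>m 1 = mat1 1"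
  unfolding mat1_def by (rule eq_matI) auto
lemma mat1_zero: "0\<^sub>m 1 1 = mat1 0"
  unfolding mat1_def by (rule eq_matI) auto

lemma fb_triv:
  assumes "X \<in> carrier_mat nr nc" "B \<in> carrier_mat nr 0" "C \<in> carrier_mat 0 nc" "D \<in> carrier_mat 0 0"
  shows "four_block_mat X B C D = X"
  by (rule eq_matI) (use assms in auto)

definition erow :: "nat \<Rightarrow> nat \<Rightarrow> 'a::zero_neq_one mat" where
  "erow n k = mat 1 n (\<lambda>(i,j). if j = k then 1 else 0)"
definition ecol :: "nat \<Rightarrow> nat \<Rightarrow> 'a::zero_neq_one mat" where
  "ecol n k = mat n 1 (\<lambda>(i,j). if i = k then 1 else 0)"

lemma erow_carrier[simp]: "erow n k \<in> carrier_mat 1 n" unfolding erow_def by auto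
lemma ecol_carrier[simp]: "ecol n k \<in> carrier_mat n 1" unfolding ecol_def by auto

lemma erow_ecol:
  fixes M :: "'a::ring_1 mat"
  assumes M: "M \<in> carrier_mat n m" and i: "i < n" and j: "j < m"
  shows "erow n i * M * ecol m j = mat1 (M $$ (i,j))"
proof -
  have r: "erow n i * M = mat 1 m (\<lambda>(_,k). M $$ (i,k))"
  proof (rule eq_matI)
    fix a k assume a: "a < dim_row (mat 1 m (\<lambda>(_,k). M $$ (i,k)))" "k < dim_col (mat 1 m (\<lambda>(_,k). M $$ (i,k)))"
    have "(erow n i * M) $$ (a,k) = (\<Sum>l\<in>{0..<n}. (if l = i then 1 else 0) * M $$ (l,k))"
      using a M unfolding erow_def by (auto simp: scalar_prod_def)
    also have "\<dots> = (\<Sum>l\<in>{0..<n}. (if l = i then M $$ (l,k) else 0))"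
      by (rule sum.cong) auto
    also have "\<dots> = M $$ (i,k)" using i by simp
    finally show "(erow n i * M) $$ (a,k) = mat 1 m (\<lambda>(_,k). M $$ (i,k)) $$ (a,k)" using a by simp
  qed (use M in \<open>auto simp: erow_def\<close>)
  show ?thesis unfolding r
  proof (rule eq_matI)
    fix a k assume a: "a < dim_row (mat1 (M $$ (i,j)))" "k < dim_col (mat1 (M $$ (i,j)))"
    have "(mat 1 m (\<lambda>(_,k). M $$ (i,k)) * ecol m j) $$ (a,k) = (\<Sum>l\<in>{0..<m}. M $$ (i,l) * (if l = j then 1 else 0))"
      using a unfolding ecol_def by (auto simp: scalar_prod_def)
    also have "\<dots> = (\<Sum>l\<in>{0..<m}. (if l = j then M $$ (i,l) else 0))"
      by (rule sum.cong) auto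
    also have "\<dots> = M $$ (i,j)" using j by simp
    finally show "(mat 1 m (\<lambda>(_,k). M $$ (i,k)) * ecol m j) $$ (a,k) = mat1 (M $$ (i,j)) $$ (a,k)" using a by simp
  qed (auto simp: ecol_def)
qed

definition side :: "nat \<Rightarrow> 'a::ring_1 mat \<Rightarrow> 'a mat \<Rightarrow> 'a mat \<Rightarrow> 'a mat \<Rightarrow> 'a \<Rightarrow> bool" where
  "side n A c b N u \<longleftrightarrow> minv n A N \<and> c \<in> carrier_mat 1 n \<and> b \<in> carrier_mat n 1 \<and> mat1 u = c * N * b"

lemma side_poly: "side 1 (1\<^sub>m 1) (mat1 p) (1\<^sub>m 1) (1\<^sub>m 1) p"
  unfolding side_def minv_def by auto

lemma side_entry: assumes "minv n A N" "i < n" "j < n" shows "side n A (erow n i) (ecol n j) N (N $$ (i,j))"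
proof -
  have "N \<in> carrier_mat n n" using assms(1) unfolding minv_def by auto
  hence "mat1 (N $$ (i,j)) = erow n i * N * ecol n j" using erow_ecol[of N n n i j] assms by auto
  thus ?thesis unfolding side_def using assms(1) erow_carrier[of n i] ecol_carrier[of n j] by blast
qed

lemma side_neg: "side n A c b N u \<Longrightarrow> side n A (- c) b N (- u)"
  unfolding side_def minv_def by (auto simp: mat1_uminus[symmetric])




lemma uminus_zero_mat[simp]: "- 0\<^sub>m n m = (0\<^sub>m n m :: 'a::group_add mat)"
  by (rule eq_matI) auto

lemma side_sum:
  assumes s1: "side n1 A1 c1 b1 N1 u1" and s2: "side n2 A2 c2 b2 N2 u2"
  shows "side (n1+n2) (four_block_mat A1 (0\<^sub>m n1 n2) (0\<^sub>m n2 n1) A2)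
     (four_block_mat c1 c2 (0\<^sub>m 0 n1) (0\<^sub>m 0 n2)) (four_block_mat b1 (0\<^sub>m n1 0) b2 (0\<^sub>m n2 0))
     (four_block_mat N1 (0\<^sub>m n1 n2) (0\<^sub>m n2 n1) N2) (u1 + u2)"
proof -
  from s1 have h1: "minv n1 A1 N1" "c1 \<in> carrier_mat 1 n1" "b1 \<in> carrier_mat n1 1" "mat1 u1 = c1 * N1 * b1"
    by (auto simp: side_def)
  from s2 have h2: "minv n2 A2 N2" "c2 \<in> carrier_mat 1 n2" "b2 \<in> carrier_mat n2 1" "mat1 u2 = c2 * N2 * b2"
    by (auto simp: side_def)
  have N: "N1 \<in> carrier_mat n1 n1" "N2 \<in> carrier_mat n2 n2" "A1 \<in> carrier_mat n1 n1" "A2 \<in> carrier_mat n2 n2"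
    using h1 h2 unfolding minv_def by auto
  have mv: "minv (n1+n2) (four_block_mat A1 (0\<^sub>m n1 n2) (0\<^sub>m n2 n1) A2)
      (four_block_mat N1 (- (N1 * 0\<^sub>m n1 n2 * N2)) (0\<^sub>m n2 n1) N2)"
    by (rule minv_ut[OF h1(1) h2(1)]) auto
  have z: "- (N1 * 0\<^sub>m n1 n2 * N2) = 0\<^sub>m n1 n2" using N by simp
  have cN: "four_block_mat c1 c2 (0\<^sub>m 0 n1) (0\<^sub>m 0 n2) * four_block_mat N1 (0\<^sub>m n1 n2) (0\<^sub>m n2 n1) N2
     = four_block_mat (c1 * N1) (c2 * N2) (0\<^sub>m 0 n1) (0\<^sub>m 0 n2)"
    by (subst mult_four_block_mat[of c1 1 n1 c2 n2 "0\<^sub>m 0 n1" 0 "0\<^sub>m 0 n2" N1 n1 "0\<^sub>m n1 n2" n2])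
      (use h1 h2 N in auto)
  have cNb: "four_block_mat (c1 * N1) (c2 * N2) (0\<^sub>m 0 n1) (0\<^sub>m 0 n2) * four_block_mat b1 (0\<^sub>m n1 0) b2 (0\<^sub>m n2 0)
     = c1 * N1 * b1 + c2 * N2 * b2"
    apply (subst mult_four_block_mat[of "c1 * N1" 1 n1 "c2 * N2" n2 "0\<^sub>m 0 n1" 0 "0\<^sub>m 0 n2" b1 1 "0\<^sub>m n1 0" 0])
    using h1 h2 N apply (auto)[8]
    apply (rule fb_triv[of _ 1 1])
    using h1 h2 N by auto
  show ?thesis unfolding side_def using mv h1 h2 N cN cNb
    by (auto simp: z mat1_add[symmetric])
qed

lemma side_mult:
  assumes s1: "side n1 A1 c1 b1 N1 u1" and s2: "side n2 A2 c2 b2 N2 u2"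
  shows "side (n1+n2) (four_block_mat A1 (- (b1 * c2)) (0\<^sub>m n2 n1) A2)
     (four_block_mat c1 (0\<^sub>m 1 n2) (0\<^sub>m 0 n1) (0\<^sub>m 0 n2)) (four_block_mat (0\<^sub>m n1 1) (0\<^sub>m n1 0) b2 (0\<^sub>m n2 0))
     (four_block_mat N1 (N1 * (b1 * (c2 * N2))) (0\<^sub>m n2 n1) N2) (u1 * u2)"
proof -
  from s1 have h1: "minv n1 A1 N1" "c1 \<in> carrier_mat 1 n1" "b1 \<in> carrier_mat n1 1" "mat1 u1 = c1 * N1 * b1"
    by (auto simp: side_def)
  from s2 have h2: "minv n2 A2 N2" "c2 \<in> carrier_mat 1 n2" "b2 \<in> carrier_mat n2 1" "mat1 u2 = c2 * N2 * b2"
    by (auto simp: side_def)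
  have N: "N1 \<in> carrier_mat n1 n1" "N2 \<in> carrier_mat n2 n2" "A1 \<in> carrier_mat n1 n1" "A2 \<in> carrier_mat n2 n2"
    using h1 h2 unfolding minv_def by auto
  have mv: "minv (n1+n2) (four_block_mat A1 (- (b1 * c2)) (0\<^sub>m n2 n1) A2)
      (four_block_mat N1 (- (N1 * - (b1 * c2) * N2)) (0\<^sub>m n2 n1) N2)"
    by (rule minv_ut[OF h1(1) h2(1)]) (use h1 h2 in auto)
  have z: "- (N1 * - (b1 * c2) * N2) = N1 * (b1 * (c2 * N2))"
  proof -
    have "N1 * - (b1 * c2) = - (N1 * (b1 * c2))" using N h1 h2 by simp
    hence "- (N1 * - (b1 * c2) * N2) = - (- (N1 * (b1 * c2)) * N2)" by simp
    also have "\<dots> = N1 * (b1 * c2) * N2" using N h1 h2 by simp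
    also have "\<dots> = N1 * (b1 * (c2 * N2))" using N h1 h2 by (simp add: assoc_dim)
    finally show ?thesis .
  qed
  have cN: "four_block_mat c1 (0\<^sub>m 1 n2) (0\<^sub>m 0 n1) (0\<^sub>m 0 n2) * four_block_mat N1 (N1 * (b1 * (c2 * N2))) (0\<^sub>m n2 n1) N2
     = four_block_mat (c1 * N1) (c1 * (N1 * (b1 * (c2 * N2)))) (0\<^sub>m 0 n1) (0\<^sub>m 0 n2)"
    by (subst mult_four_block_mat[of c1 1 n1 "0\<^sub>m 1 n2" n2 "0\<^sub>m 0 n1" 0 "0\<^sub>m 0 n2" N1 n1 _ n2])
      (use h1 h2 N in auto)
  have cNb: "four_block_mat (c1 * N1) (c1 * (N1 * (b1 * (c2 * N2)))) (0\<^sub>m 0 n1) (0\<^sub>m 0 n2) * four_block_mat (0\<^sub>m n1 1) (0\<^sub>m n1 0) b2 (0\<^sub>m n2 0)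
     = c1 * (N1 * (b1 * (c2 * N2))) * b2"
    apply (subst mult_four_block_mat[of "c1 * N1" 1 n1 _ n2 "0\<^sub>m 0 n1" 0 "0\<^sub>m 0 n2" _ 1 "0\<^sub>m n1 0" 0])
    using h1 h2 N apply (auto)[8]
    apply (rule trans[OF fb_triv[of _ 1 1]])
    using h1 h2 N by auto
  have fin: "c1 * (N1 * (b1 * (c2 * N2))) * b2 = (c1 * N1 * b1) * (c2 * N2 * b2)"
    using h1 h2 N by (simp add: assoc_dim)
  have mv': "minv (n1+n2) (four_block_mat A1 (- (b1 * c2)) (0\<^sub>m n2 n1) A2)
      (four_block_mat N1 (N1 * (b1 * (c2 * N2))) (0\<^sub>m n2 n1) N2)" using mv unfolding z .
  have e: "mat1 (u1 * u2) = four_block_mat c1 (0\<^sub>m 1 n2) (0\<^sub>m 0 n1) (0\<^sub>m 0 n2) * four_block_mat N1 (N1 * (b1 * (c2 * N2))) (0\<^sub>m n2 n1) N2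
      * four_block_mat (0\<^sub>m n1 1) (0\<^sub>m n1 0) b2 (0\<^sub>m n2 0)"
    unfolding cN cNb fin mat1_mult[symmetric] h1(4) h2(4) ..
  show ?thesis unfolding side_def
    by (intro conjI mv' e) (use h1 h2 in auto)
qed


lemma mat1_carrier'[simp]: "mat1 a \<in> carrier_mat (Suc 0) (Suc 0)"
  using mat1_carrier by simp

lemma side_inv:
  assumes s: "side n A c b N u" and w: "u * w = 1" "w * u = 1"
  shows "\<exists>K. side (n+1) (bord A b c) (erow (n+1) n) (ecol (n+1) n) K (- w)"
proof -
  from s have h: "minv n A N" "c \<in> carrier_mat 1 n" "b \<in> carrier_mat n 1" "mat1 u = c * N * b"
    by (auto simp: side_def)
  have NN: "A \<in> carrier_mat n n" "N \<in> carrier_mat n n" using h unfolding minv_def by auto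
  have U: "minv 1 (- (c * N * b)) (- mat1 w)" unfolding minv_def h(4)[symmetric]
    using w by (auto simp: mat1_uminus mat1_mult mat1_one)
  have D: "minv (n+1) (four_block_mat A (0\<^sub>m n 1) (0\<^sub>m 1 n) (- (c * N * b)))
     (four_block_mat N (- (N * 0\<^sub>m n 1 * - mat1 w)) (0\<^sub>m 1 n) (- mat1 w))"
    by (rule minv_ut[OF h(1) U]) auto
  have z: "- (N * 0\<^sub>m n 1 * - mat1 w) = 0\<^sub>m n 1" using NN by simp
  define Pm where "Pm = four_block_mat (1\<^sub>m n) (0\<^sub>m n 1) (- (c * N)) (1\<^sub>m 1)"
  define Qm where "Qm = four_block_mat (1\<^sub>m n) (- (N * b)) (0\<^sub>m 1 n) (1\<^sub>m 1)"
  define D' where "D' = four_block_mat N (0\<^sub>m n 1) (0\<^sub>m 1 n) (- mat1 w)"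
  have P: "minv (n+1) Pm
     (four_block_mat (1\<^sub>m n) (0\<^sub>m n 1) (- (1\<^sub>m 1 * - (c * N) * 1\<^sub>m n)) (1\<^sub>m 1))"
    unfolding Pm_def by (rule minv_lt[OF minv_one minv_one]) (use NN h in auto)
  have Q: "minv (n+1) Qm
     (four_block_mat (1\<^sub>m n) (- (1\<^sub>m n * - (N * b) * 1\<^sub>m 1)) (0\<^sub>m 1 n) (1\<^sub>m 1))"
    unfolding Qm_def by (rule minv_ut[OF minv_one minv_one]) (use NN h in auto)
  have C: "bord A b c \<in> carrier_mat (n+1) (n+1)" unfolding bord_def using NN h by auto
  have K: "minv (n+1) (bord A b c) (Qm * D' * Pm)"
    by (rule minv_conj[OF P Q C D[unfolded z, folded D'_def]])
      (unfold Pm_def Qm_def, rule border_factor[OF h(1) h(3) h(2)])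
  have QD: "Qm * D' = four_block_mat (1\<^sub>m n * N + - (N * b) * 0\<^sub>m 1 n) (1\<^sub>m n * 0\<^sub>m n 1 + - (N * b) * - mat1 w)
     (0\<^sub>m 1 n * N + 1\<^sub>m 1 * 0\<^sub>m 1 n) (0\<^sub>m 1 n * 0\<^sub>m n 1 + 1\<^sub>m 1 * - mat1 w)"
    unfolding Qm_def D'_def
    by (rule mult_four_block_mat[of _ n n _ 1 _ 1 _ _ n _ 1]) (use NN h in auto)
  have V: "0\<^sub>m 1 n * 0\<^sub>m n 1 + 1\<^sub>m 1 * - mat1 w = - mat1 w" by simp
  have QDP: "Qm * D' * Pm = four_block_mat
     ((1\<^sub>m n * N + - (N * b) * 0\<^sub>m 1 n) * 1\<^sub>m n + (1\<^sub>m n * 0\<^sub>m n 1 + - (N * b) * - mat1 w) * - (c * N))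
     ((1\<^sub>m n * N + - (N * b) * 0\<^sub>m 1 n) * 0\<^sub>m n 1 + (1\<^sub>m n * 0\<^sub>m n 1 + - (N * b) * - mat1 w) * 1\<^sub>m 1)
     ((0\<^sub>m 1 n * N + 1\<^sub>m 1 * 0\<^sub>m 1 n) * 1\<^sub>m n + (- mat1 w) * - (c * N))
     ((0\<^sub>m 1 n * N + 1\<^sub>m 1 * 0\<^sub>m 1 n) * 0\<^sub>m n 1 + (- mat1 w) * 1\<^sub>m 1)"
    unfolding QD V Pm_def
    by (rule mult_four_block_mat[of _ n n _ 1 _ 1 _ _ n _ 1]) (use NN h in auto)
  have entry: "(Qm * D' * Pm) $$ (n,n) = - w"
    unfolding QDP using NN h by (simp add: mat1_uminus)
  show ?thesis using side_entry[OF K, of n n] unfolding entry by auto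
qed

definition cvt :: "'a::ring_1 mat \<Rightarrow> 'a mat \<Rightarrow> 'a mat \<Rightarrow> nat \<Rightarrow> 'a mat" where
  "cvt A b c n = four_block_mat (1\<^sub>m 1) (four_block_mat c (0\<^sub>m 1 1) (0\<^sub>m 0 n) (0\<^sub>m 0 1)) (0\<^sub>m (n+1) 1)
     (four_block_mat A b (0\<^sub>m 1 n) (1\<^sub>m 1))"

lemma side_cvt:
  assumes s: "side n A c b N u"
  shows "\<exists>K. minv (1 + (n+1)) (cvt A b c n) K \<and> K $$ (0, n+1) = u"
proof -
  from s have h: "minv n A N" "c \<in> carrier_mat 1 n" "b \<in> carrier_mat n 1" "mat1 u = c * N * b"
    by (auto simp: side_def)
  have NN: "A \<in> carrier_mat n n" "N \<in> carrier_mat n n" using h unfolding minv_def by auto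
  have D: "minv (n+1) (four_block_mat A b (0\<^sub>m 1 n) (1\<^sub>m 1))
     (four_block_mat N (- (N * b * 1\<^sub>m 1)) (0\<^sub>m 1 n) (1\<^sub>m 1))"
    by (rule minv_ut[OF h(1) minv_one]) (use h in auto)
  define R where "R = four_block_mat c (0\<^sub>m 1 1) (0\<^sub>m 0 n) (0\<^sub>m 0 1)"
  define D' where "D' = four_block_mat N (- (N * b * 1\<^sub>m 1)) (0\<^sub>m 1 n) (1\<^sub>m 1)"
  have R: "R \<in> carrier_mat 1 (n+1)" unfolding R_def using h by auto
  have K: "minv (1 + (n+1)) (cvt A b c n) (four_block_mat (1\<^sub>m 1) (- (1\<^sub>m 1 * R * D')) (0\<^sub>m (n+1) 1) D')"
    unfolding cvt_def R_def[symmetric] D'_def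
    by (rule minv_ut[OF minv_one D]) (use R in auto)
  have RD: "R * D' = four_block_mat (c * N + 0\<^sub>m 1 1 * 0\<^sub>m 1 n) (c * - (N * b * 1\<^sub>m 1) + 0\<^sub>m 1 1 * 1\<^sub>m 1)
     (0\<^sub>m 0 n * N + 0\<^sub>m 0 1 * 0\<^sub>m 1 n) (0\<^sub>m 0 n * - (N * b * 1\<^sub>m 1) + 0\<^sub>m 0 1 * 1\<^sub>m 1)"
    unfolding R_def D'_def
    by (rule mult_four_block_mat[of _ 1 n _ 1 _ 0 _ _ n _ 1]) (use NN h in auto)
  have D'c: "D' \<in> carrier_mat (n+1) (n+1)" unfolding D'_def using NN h by auto
  have e1: "(- (1\<^sub>m 1 * R * D')) $$ (0, n) = - ((R * D') $$ (0, n))"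
    using R D'c by simp
  have e2: "(R * D') $$ (0, n) = (c * - (N * b * 1\<^sub>m 1) + 0\<^sub>m 1 1 * 1\<^sub>m 1) $$ (0,0)"
    unfolding RD using NN h by simp
  have e3: "c * - (N * b * 1\<^sub>m 1) = - mat1 u"
    unfolding h(4) using NN h by (simp add: assoc_dim)
  have e4: "(R * D') $$ (0, n) = - u"
    unfolding e2 e3 by (simp add: mat1_uminus)
  have "four_block_mat (1\<^sub>m 1) (- (1\<^sub>m 1 * R * D')) (0\<^sub>m (n+1) 1) D' $$ (0, n+1) = (- (1\<^sub>m 1 * R * D')) $$ (0, n)"
    using D'c R by simp
  also have "\<dots> = u" using e1 e4 by simp
  finally have "four_block_mat (1\<^sub>m 1) (- (1\<^sub>m 1 * R * D')) (0\<^sub>m (n+1) 1) D' $$ (0, n+1) = u" .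
  thus ?thesis using K by blast
qed




fun psum :: "ncpoly list \<Rightarrow> ncpoly" where
  "psum [] = PConst 0"
| "psum (p # ps) = PAdd p (psum ps)"

lemma pvars_psum: "pvars (psum ps) = (\<Union>p\<in>set ps. pvars p)"
  by (induction ps) auto

lemma emb_facts:
  assumes "complex_alg emb"
  shows "emb 0 = 0" "emb 1 = 1" "emb (-1) = -1" "\<And>c e. emb (c + e) = emb c + emb e"
    "\<And>c e. emb (c * e) = emb c * emb e"
proof -
  have a: "\<And>c e. emb (c + e) = emb c + emb e" and o: "emb 1 = 1" and m: "\<And>c e. emb (c * e) = emb c * emb e"
    using assms unfolding complex_alg_def by blast+
  have "emb (0 + 0) = emb 0 + emb 0" by (rule a)
  hence "emb 0 + emb 0 = emb 0 + 0" by simp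
  thus z: "emb 0 = 0" by (rule add_left_imp_eq)
  have "emb (1 + -1) = emb 1 + emb (-1)" by (rule a)
  hence "1 + emb (-1) = 0" unfolding o using z by simp
  thus "emb (-1) = -1" by (metis add.commute add_eq_0_iff)
  show "emb 1 = 1" "\<And>c e. emb (c + e) = emb c + emb e" "\<And>c e. emb (c * e) = emb c * emb e"
    using a o m by auto
qed

lemma peval_psum: assumes "complex_alg emb" shows "peval emb X (psum ps) = sum_list (map (peval emb X) ps)"
  by (induction ps) (simp_all add: emb_facts(1)[OF assms])

lemma mat_eval_dims[simp]: "dim_row (mat_eval emb X A) = dim_row A" "dim_col (mat_eval emb X A) = dim_col A"
  unfolding mat_eval_def by auto

lemma mat_eval_index[simp]: "i < dim_row A \<Longrightarrow> j < dim_col A \<Longrightarrow> mat_eval emb X A $$ (i,j) = peval emb X (A $$ (i,j))"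
  unfolding mat_eval_def by auto

lemma mat_eval_four_block:
  assumes "A1 \<in> carrier_mat nr1 nc1" "A2 \<in> carrier_mat nr1 nc2" "A3 \<in> carrier_mat nr2 nc1" "A4 \<in> carrier_mat nr2 nc2"
  shows "mat_eval emb X (four_block_mat A1 A2 A3 A4) =
    four_block_mat (mat_eval emb X A1) (mat_eval emb X A2) (mat_eval emb X A3) (mat_eval emb X A4)"
  unfolding mat_eval_def by (rule map_four_block_mat[OF assms])

lemma is_poly_mat_four_block:
  assumes "A1 \<in> carrier_mat nr1 nc1" "A2 \<in> carrier_mat nr1 nc2" "A3 \<in> carrier_mat nr2 nc1" "A4 \<in> carrier_mat nr2 nc2"
    "is_poly_mat d A1" "is_poly_mat d A2" "is_poly_mat d A3" "is_poly_mat d A4"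
  shows "is_poly_mat d (four_block_mat A1 A2 A3 A4)"
  unfolding is_poly_mat_def
proof (intro allI impI)
  fix i j assume ij: "i < dim_row (four_block_mat A1 A2 A3 A4)" "j < dim_col (four_block_mat A1 A2 A3 A4)"
  show "is_poly d (four_block_mat A1 A2 A3 A4 $$ (i, j))"
    using ij assms unfolding is_poly_mat_def carrier_mat_def by (auto simp del: One_nat_def)
qed

locale spec_setup =
  fixes d :: nat and embA :: "complex \<Rightarrow> 'a::ring_1" and X :: "nat \<Rightarrow> 'a"
    and embB :: "complex \<Rightarrow> 'b::ring_1" and Y :: "nat \<Rightarrow> 'b"
    and rkA :: "'a mat \<Rightarrow> real" and rkB :: "'b mat \<Rightarrow> real"
  assumes algA: "complex_alg embA" and algB: "complex_alg embB"
    and srA: "sylvester_rank rkA" and faA: "faithful_rank rkA" and reA: "regular_rank rkA"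
    and srB: "sylvester_rank rkB" and faB: "faithful_rank rkB" and reB: "regular_rank rkB"
    and hyp: "\<And>A. is_poly_mat d A \<Longrightarrow> rkB (mat_eval embB Y A) \<le> rkA (mat_eval embA X A)"
begin

lemmas eA = emb_facts[OF algA] and eB = emb_facts[OF algB]



definition PE :: "'a mat \<Rightarrow> 'b mat \<Rightarrow> bool" where
  "PE P Q \<longleftrightarrow> (\<exists>A. is_poly_mat d A \<and> P = mat_eval embA X A \<and> Q = mat_eval embB Y A)"

lemma PE_dims: "PE P Q \<Longrightarrow> dim_row Q = dim_row P \<and> dim_col Q = dim_col P"
  unfolding PE_def by auto

lemma PE_rank: "PE P Q \<Longrightarrow> rkB Q \<le> rkA P"
  unfolding PE_def using hyp by auto

lemma PE_const:
  assumes "\<And>i j. i < n \<Longrightarrow> j < m \<Longrightarrow> P $$ (i,j) = embA (f i j)" "P \<in> carrier_mat n m"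
    "\<And>i j. i < n \<Longrightarrow> j < m \<Longrightarrow> Q $$ (i,j) = embB (f i j)" "Q \<in> carrier_mat n m"
  shows "PE P Q"
  unfolding PE_def
proof (intro exI conjI)
  let ?A = "mat n m (\<lambda>(i,j). PConst (f i j))"
  show "is_poly_mat d ?A" unfolding is_poly_mat_def is_poly_def by auto
  show "P = mat_eval embA X ?A" by (rule eq_matI) (use assms in auto)
  show "Q = mat_eval embB Y ?A" by (rule eq_matI) (use assms in auto)
qed

lemma PE_zero: "PE (0\<^sub>m n m) (0\<^sub>m n m)"
  by (rule PE_const[where f = "\<lambda>_ _. 0" and n = n and m = m]) (auto simp: eA eB)

lemma PE_one: "PE (1\<^sub>m n) (1\<^sub>m n)"
  by (rule PE_const[where f = "\<lambda>i j. if i = j then 1 else 0" and n = n and m = n]) (auto simp: eA eB)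

lemma PE_erow: "PE (erow n k) (erow n k)"
  by (rule PE_const[where f = "\<lambda>i j. if j = k then 1 else 0" and n = 1 and m = n]) (auto simp: eA eB erow_def)

lemma PE_ecol: "PE (ecol n k) (ecol n k)"
  by (rule PE_const[where f = "\<lambda>i j. if i = k then 1 else 0" and n = n and m = 1]) (auto simp: eA eB ecol_def)

lemma PE_mat1: "is_poly d p \<Longrightarrow> PE (mat1 (peval embA X p)) (mat1 (peval embB Y p))"
  unfolding PE_def
proof (intro exI conjI)
  assume p: "is_poly d p"
  show "is_poly_mat d (mat1 p)" unfolding is_poly_mat_def mat1_def using p by auto
  show "mat1 (peval embA X p) = mat_eval embA X (mat1 p)" by (rule eq_matI) (auto simp: mat1_def)
  show "mat1 (peval embB Y p) = mat_eval embB Y (mat1 p)" by (rule eq_matI) (auto simp: mat1_def)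
qed

lemma PE_four_block:
  assumes "PE P1 Q1" "PE P2 Q2" "PE P3 Q3" "PE P4 Q4"
    "P1 \<in> carrier_mat nr1 nc1" "P2 \<in> carrier_mat nr1 nc2" "P3 \<in> carrier_mat nr2 nc1" "P4 \<in> carrier_mat nr2 nc2"
  shows "PE (four_block_mat P1 P2 P3 P4) (four_block_mat Q1 Q2 Q3 Q4)"
proof -
  obtain A1 where A1: "is_poly_mat d A1" "P1 = mat_eval embA X A1" "Q1 = mat_eval embB Y A1"
    using assms(1) unfolding PE_def by blast
  obtain A2 where A2: "is_poly_mat d A2" "P2 = mat_eval embA X A2" "Q2 = mat_eval embB Y A2"
    using assms(2) unfolding PE_def by blast
  obtain A3 where A3: "is_poly_mat d A3" "P3 = mat_eval embA X A3" "Q3 = mat_eval embB Y A3"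
    using assms(3) unfolding PE_def by blast
  obtain A4 where A4: "is_poly_mat d A4" "P4 = mat_eval embA X A4" "Q4 = mat_eval embB Y A4"
    using assms(4) unfolding PE_def by blast
  have c: "A1 \<in> carrier_mat nr1 nc1" "A2 \<in> carrier_mat nr1 nc2" "A3 \<in> carrier_mat nr2 nc1" "A4 \<in> carrier_mat nr2 nc2"
    using assms(5) assms(6) assms(7) assms(8) unfolding A1(2) A2(2) A3(2) A4(2) carrier_mat_def by auto
  show ?thesis unfolding PE_def A1(2,3) A2(2,3) A3(2,3) A4(2,3) mat_eval_four_block[OF c, symmetric]
    by (intro exI[of _ "four_block_mat A1 A2 A3 A4"] conjI is_poly_mat_four_block[OF c] A1(1) A2(1) A3(1) A4(1) refl)
qed

lemma PE_add:
  assumes "PE P Q" "PE P' Q'" "P \<in> carrier_mat n m" "P' \<in> carrier_mat n m"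
  shows "PE (P + P') (Q + Q')"
proof -
  obtain A where A1: "is_poly_mat d A" "P = mat_eval embA X A" "Q = mat_eval embB Y A"
    using assms(1) unfolding PE_def by blast
  obtain A' where A2: "is_poly_mat d A'" "P' = mat_eval embA X A'" "Q' = mat_eval embB Y A'"
    using assms(2) unfolding PE_def by blast
  note A = A1 A2
  have c: "A \<in> carrier_mat n m" "A' \<in> carrier_mat n m" using assms(3) assms(4) unfolding A1(2) A2(2) carrier_mat_def by auto
  show ?thesis unfolding PE_def
  proof (intro exI conjI)
    let ?W = "mat n m (\<lambda>ij. PAdd (A $$ ij) (A' $$ ij))"
    show "is_poly_mat d ?W" using A(1,4) c unfolding is_poly_mat_def is_poly_def by auto
    show "P + P' = mat_eval embA X ?W" by (rule eq_matI) (use A c in auto)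
    show "Q + Q' = mat_eval embB Y ?W" by (rule eq_matI) (use A c in auto)
  qed
qed

lemma PE_uminus:
  assumes "PE P Q"
  shows "PE (- P) (- Q)"
proof -
  obtain A where A: "is_poly_mat d A" "P = mat_eval embA X A" "Q = mat_eval embB Y A"
    using assms unfolding PE_def by blast
  show ?thesis unfolding PE_def
  proof (intro exI conjI)
    let ?W = "mat (dim_row A) (dim_col A) (\<lambda>ij. PMul (PConst (-1)) (A $$ ij))"
    show "is_poly_mat d ?W" using A(1) unfolding is_poly_mat_def is_poly_def by auto
    show "- P = mat_eval embA X ?W" by (rule eq_matI) (use A in \<open>auto simp: eA\<close>)
    show "- Q = mat_eval embB Y ?W" by (rule eq_matI) (use A in \<open>auto simp: eB\<close>)
  qed
qed


lemma PE_mult: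
  assumes "PE P Q" "PE P' Q'" "dim_col P = dim_row P'"
  shows "PE (P * P') (Q * Q')"
proof -
  obtain A where A1: "is_poly_mat d A" "P = mat_eval embA X A" "Q = mat_eval embB Y A"
    using assms(1) unfolding PE_def by blast
  obtain A' where A2: "is_poly_mat d A'" "P' = mat_eval embA X A'" "Q' = mat_eval embB Y A'"
    using assms(2) unfolding PE_def by blast
  note A = A1 A2
  define n where "n = dim_col A"
  have n: "dim_row A' = n" using assms(3) A unfolding n_def by simp
  let ?W = "mat (dim_row A) (dim_col A') (\<lambda>(i,j). psum (map (\<lambda>k. PMul (A $$ (i,k)) (A' $$ (k,j))) [0..<n]))"
  have ev: "\<And>emb Z. complex_alg emb \<Longrightarrow> mat_eval emb Z A * mat_eval emb Z A' = mat_eval emb Z ?W"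
  proof -
    fix emb :: "complex \<Rightarrow> 'c::ring_1" and Z
    assume al: "complex_alg emb"
    show "mat_eval emb Z A * mat_eval emb Z A' = mat_eval emb Z ?W"
    proof (rule eq_matI)
      fix i j assume ij: "i < dim_row (mat_eval emb Z ?W)" "j < dim_col (mat_eval emb Z ?W)"
      have "(mat_eval emb Z A * mat_eval emb Z A') $$ (i,j) = (\<Sum>k\<in>{0..<n}. peval emb Z (A $$ (i,k)) * peval emb Z (A' $$ (k,j)))"
        using ij n unfolding n_def by (auto simp: scalar_prod_def)
      also have "\<dots> = sum_list (map (\<lambda>k. peval emb Z (A $$ (i,k)) * peval emb Z (A' $$ (k,j))) [0..<n])"
        by (simp add: interv_sum_list_conv_sum_set_nat)
      also have "\<dots> = mat_eval emb Z ?W $$ (i,j)"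
        using ij by (simp add: peval_psum[OF al] o_def)
      finally show "(mat_eval emb Z A * mat_eval emb Z A') $$ (i,j) = mat_eval emb Z ?W $$ (i,j)" .
    qed auto
  qed
  show ?thesis unfolding PE_def
  proof (intro exI conjI)
    show "is_poly_mat d ?W" using A(1,4) n unfolding is_poly_mat_def is_poly_def n_def
      by (auto simp: pvars_psum subset_iff)
    show "P * P' = mat_eval embA X ?W" using ev[OF algA] A by simp
    show "Q * Q' = mat_eval embB Y ?W" using ev[OF algB] A by simp
  qed
qed

end




lemma invertible_minv:
  fixes A :: "'a::ring_1 mat"
  assumes A: "A \<in> carrier_mat n n" and inv: "invertible_mat A"
  shows "\<exists>B. minv n A B"
proof -
  obtain B where B: "A * B = 1\<^sub>m (dim_row A)" "B * A = 1\<^sub>m (dim_row B)"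
    using inv unfolding invertible_mat_def inverts_mat_def by blast
  have r: "dim_row B = n"
  proof -
    have "dim_col (B * A) = n" using A by simp
    thus ?thesis using B(2) by simp
  qed
  have c: "dim_col B = n"
  proof -
    have "dim_col (A * B) = dim_col B" by simp
    thus ?thesis using B(1) A by simp
  qed
  show ?thesis unfolding minv_def using A B r c by (intro exI[of _ B]) auto
qed

lemma regularD: "regular_rank rk \<Longrightarrow> A \<in> carrier_mat n n \<Longrightarrow> rk A = real n \<Longrightarrow> invertible_mat A"
  unfolding regular_rank_def by blast

lemma rat_closure_intro:
  assumes W: "is_poly_mat d W" and K: "minv m (mat_eval emb Z W) K" and ij: "i < m" "j < m"
  shows "K $$ (i,j) \<in> rat_closure d emb Z"
proof -
  have c: "mat_eval emb Z W \<in> carrier_mat m m" "K \<in> carrier_mat m m"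
    "mat_eval emb Z W * K = 1\<^sub>m m" "K * mat_eval emb Z W = 1\<^sub>m m" using K unfolding minv_def by auto
  have Wc: "W \<in> carrier_mat m m" using c(1) unfolding carrier_mat_def by simp
  have "W \<in> Sigma d emb Z UNIV" unfolding Sigma_def inv_in_def entries_in_def
    using W Wc c by (auto simp: square_mat.simps)
  thus ?thesis unfolding rat_closure_def
    by (intro CollectI exI[of _ W] exI[of _ K] exI[of _ m] exI[of _ i] exI[of _ j] conjI refl) (use Wc c ij in simp_all)
qed

lemma side_carriers: "side n A c b N u \<Longrightarrow> A \<in> carrier_mat n n \<and> c \<in> carrier_mat 1 n \<and> b \<in> carrier_mat n 1 \<and> N \<in> carrier_mat n n"
  unfolding side_def minv_def by auto

context spec_setup
begin

lemma PE_fb: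
  assumes "PE P1 Q1" "PE P2 Q2" "PE P3 Q3" "PE P4 Q4"
    "dim_row P1 = ra" "dim_col P1 = ca" "dim_row P2 = ra" "dim_col P2 = cb"
    "dim_row P3 = rb" "dim_col P3 = ca" "dim_row P4 = rb" "dim_col P4 = cb"
  shows "PE (four_block_mat P1 P2 P3 P4) (four_block_mat Q1 Q2 Q3 Q4)"
  by (rule PE_four_block[OF assms(1-4)]) (use assms(5-) in auto)

lemma side_dims: "side n A c b N u \<Longrightarrow> dim_row A = n \<and> dim_col A = n \<and> dim_row c = 1 \<and> dim_col c = n \<and>
   dim_row b = n \<and> dim_col b = 1 \<and> dim_row N = n \<and> dim_col N = n"
  unfolding side_def minv_def by auto

definition Rep :: "'a \<Rightarrow> 'b \<Rightarrow> bool" where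
  "Rep u v \<longleftrightarrow> (\<exists>n AX AY cX cY bX bY NX NY. PE AX AY \<and> PE cX cY \<and> PE bX bY \<and>
     side n AX cX bX NX u \<and> side n AY cY bY NY v)"

lemma Rep_intro: "PE AX AY \<Longrightarrow> PE cX cY \<Longrightarrow> PE bX bY \<Longrightarrow> side n AX cX bX NX u \<Longrightarrow> side n AY cY bY NY v \<Longrightarrow> Rep u v"
  unfolding Rep_def by blast

lemma Rep_poly: "is_poly d p \<Longrightarrow> Rep (peval embA X p) (peval embB Y p)"
  by (rule Rep_intro[OF PE_one PE_mat1 PE_one side_poly side_poly])

lemma Rep_neg: "Rep u v \<Longrightarrow> Rep (- u) (- v)"
proof -
  assume "Rep u v"
  then obtain n AX AY cX cY bX bY NX NY where 1: "PE AX AY" "PE cX cY" "PE bX bY"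
     "side n AX cX bX NX u" "side n AY cY bY NY v" unfolding Rep_def by blast
  show ?thesis by (rule Rep_intro[OF 1(1) PE_uminus[OF 1(2)] 1(3) side_neg[OF 1(4)] side_neg[OF 1(5)]])
qed

lemma Rep_add:
  assumes "Rep u1 v1" "Rep u2 v2" shows "Rep (u1 + u2) (v1 + v2)"
proof -
  obtain n1 AX1 AY1 cX1 cY1 bX1 bY1 NX1 NY1 where 1: "PE AX1 AY1" "PE cX1 cY1" "PE bX1 bY1"
     "side n1 AX1 cX1 bX1 NX1 u1" "side n1 AY1 cY1 bY1 NY1 v1" using assms(1) unfolding Rep_def by blast
  obtain n2 AX2 AY2 cX2 cY2 bX2 bY2 NX2 NY2 where 2: "PE AX2 AY2" "PE cX2 cY2" "PE bX2 bY2"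
     "side n2 AX2 cX2 bX2 NX2 u2" "side n2 AY2 cY2 bY2 NY2 v2" using assms(2) unfolding Rep_def by blast
  note c1 = side_carriers[OF 1(4)] and c2 = side_carriers[OF 2(4)]
  note d1 = side_dims[OF 1(4)] and d2 = side_dims[OF 2(4)]
  show ?thesis
    apply (rule Rep_intro[OF _ _ _ side_sum[OF 1(4) 2(4)] side_sum[OF 1(5) 2(5)]])
      apply (rule PE_fb[where ra=n1 and ca=n1 and rb=n2 and cb=n2, OF 1(1) PE_zero PE_zero 2(1)]; use d1 d2 in simp)
     apply (rule PE_fb[where ra=1 and ca=n1 and rb=0 and cb=n2, OF 1(2) 2(2) PE_zero PE_zero]; use d1 d2 in simp)
    apply (rule PE_fb[where ra=n1 and ca=1 and rb=n2 and cb=0, OF 1(3) PE_zero 2(3) PE_zero]; use d1 d2 in simp)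
    done
qed

lemma Rep_mult:
  assumes "Rep u1 v1" "Rep u2 v2" shows "Rep (u1 * u2) (v1 * v2)"
proof -
  obtain n1 AX1 AY1 cX1 cY1 bX1 bY1 NX1 NY1 where 1: "PE AX1 AY1" "PE cX1 cY1" "PE bX1 bY1"
     "side n1 AX1 cX1 bX1 NX1 u1" "side n1 AY1 cY1 bY1 NY1 v1" using assms(1) unfolding Rep_def by blast
  obtain n2 AX2 AY2 cX2 cY2 bX2 bY2 NX2 NY2 where 2: "PE AX2 AY2" "PE cX2 cY2" "PE bX2 bY2"
     "side n2 AX2 cX2 bX2 NX2 u2" "side n2 AY2 cY2 bY2 NY2 v2" using assms(2) unfolding Rep_def by blast
  note c1 = side_carriers[OF 1(4)] and c2 = side_carriers[OF 2(4)]
  note d1 = side_dims[OF 1(4)] and d2 = side_dims[OF 2(4)]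
  have bc: "PE (- (bX1 * cX2)) (- (bY1 * cY2))"
    by (rule PE_uminus[OF PE_mult[OF 1(3) 2(2)]]) (use d1 d2 in auto)
  show ?thesis
    apply (rule Rep_intro[OF _ _ _ side_mult[OF 1(4) 2(4)] side_mult[OF 1(5) 2(5)]])
      apply (rule PE_fb[where ra=n1 and ca=n1 and rb=n2 and cb=n2, OF 1(1) bc PE_zero 2(1)]; use d1 d2 in simp)
     apply (rule PE_fb[where ra=1 and ca=n1 and rb=0 and cb=n2, OF 1(2) PE_zero PE_zero PE_zero]; use d1 d2 in simp)
    apply (rule PE_fb[where ra=n1 and ca=1 and rb=n2 and cb=0, OF PE_zero PE_zero 2(3) PE_zero]; use d1 d2 in simp)
    done
qed

lemma PE_bord:
  assumes "PE AX AY" "PE bX bY" "PE cX cY" "AX \<in> carrier_mat n n" "bX \<in> carrier_mat n 1" "cX \<in> carrier_mat 1 n"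
  shows "PE (bord AX bX cX) (bord AY bY cY)"
  unfolding bord_def by (rule PE_fb[where ra=n and ca=n and rb=1 and cb=1, OF assms(1-3) PE_zero]) (use assms in auto)

lemma Rep_rank:
  assumes "Rep u v" shows "rkB (mat1 v) \<le> rkA (mat1 u)"
proof -
  obtain n AX AY cX cY bX bY NX NY where 1: "PE AX AY" "PE cX cY" "PE bX bY"
     "side n AX cX bX NX u" "side n AY cY bY NY v" using assms unfolding Rep_def by blast
  note c1 = side_carriers[OF 1(4)]
  note d1 = side_dims[OF 1(4)]
  have pe: "PE (bord AX bX cX) (bord AY bY cY)" by (rule PE_bord[OF 1(1,3,2)]) (use c1 in auto)
  have "rkA (bord AX bX cX) = real n + rkA (mat1 u)"
    using rk_border[OF srA, of n AX NX bX cX] 1(4) unfolding side_def by auto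
  moreover have "rkB (bord AY bY cY) = real n + rkB (mat1 v)"
    using rk_border[OF srB, of n AY NY bY cY] 1(5) unfolding side_def by auto
  ultimately show ?thesis using PE_rank[OF pe] by simp
qed

lemma Rep_unique:
  assumes "Rep u v" "Rep u v'" shows "v = v'"
proof (rule ccontr)
  assume ne: "v \<noteq> v'"
  have "Rep (u + - u) (v + - v')" by (rule Rep_add[OF assms(1) Rep_neg[OF assms(2)]])
  hence "rkB (mat1 (v + - v')) \<le> rkA (mat1 (u + - u))" by (rule Rep_rank)
  hence r: "rkB (mat1 (v + - v')) \<le> rkA (mat1 0)" by simp
  have "rkA (mat1 0) = 0" unfolding mat1_zero[symmetric] by (rule rk_zero[OF srA])
  moreover have "rkB (mat1 (v + - v')) > 0"
  proof -
    have "mat1 (v + - v') \<noteq> 0\<^sub>m 1 1" unfolding mat1_zero using ne by (simp add: mat1_eq_iff)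
    thus ?thesis using faB unfolding faithful_rank_def by auto
  qed
  ultimately show False using r by simp
qed

lemma inv_mat1:
  fixes u :: "'c::ring_1"
  assumes rk: "sylvester_rank rk" and re: "regular_rank rk" and r: "rk (mat1 u) \<ge> 1"
  shows "\<exists>w. u * w = 1 \<and> w * u = 1"
proof -
  have "rk (mat1 u) \<le> 1" using rk_le_rows[OF rk, of "mat1 u" 1 1] by simp
  hence "rk (mat1 u) = real 1" using r by simp
  hence "invertible_mat (mat1 u)" by (rule regularD[OF re mat1_carrier])
  then obtain B where B: "minv 1 (mat1 u) B" using invertible_minv[of "mat1 u" 1] by auto
  hence Bc: "B \<in> carrier_mat 1 1" "mat1 u * B = 1\<^sub>m 1" "B * mat1 u = 1\<^sub>m 1" unfolding minv_def by auto
  obtain b where Be: "B = mat1 b" using mat1_of[OF Bc(1)] by blast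
  have "mat1 (u * b) = mat1 1" "mat1 (b * u) = mat1 1"
    using Bc(2,3) unfolding Be mat1_mult mat1_one by auto
  thus ?thesis by (auto simp: mat1_eq_iff)
qed

lemma Rep_inv:
  assumes R: "Rep u v" and w: "v * w = 1" "w * v = 1"
  shows "\<exists>w'. u * w' = 1 \<and> w' * u = 1 \<and> Rep w' w"
proof -
  have "minv 1 (mat1 v) (mat1 w)" unfolding minv_def using w by (auto simp: mat1_mult mat1_one)
  hence "rkB (mat1 v) = 1" using rk_minv[OF srB] by simp
  hence "rkA (mat1 u) \<ge> 1" using Rep_rank[OF R] by simp
  then obtain w' where w': "u * w' = 1" "w' * u = 1" using inv_mat1[OF srA reA] by blast
  obtain n AX AY cX cY bX bY NX NY where 1: "PE AX AY" "PE cX cY" "PE bX bY"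
     "side n AX cX bX NX u" "side n AY cY bY NY v" using R unfolding Rep_def by blast
  note c1 = side_carriers[OF 1(4)]
  note d1 = side_dims[OF 1(4)]
  obtain KX where KX: "side (n+1) (bord AX bX cX) (erow (n+1) n) (ecol (n+1) n) KX (- w')"
    using side_inv[OF 1(4) w'] by blast
  obtain KY where KY: "side (n+1) (bord AY bY cY) (erow (n+1) n) (ecol (n+1) n) KY (- w)"
    using side_inv[OF 1(5) w] by blast
  have pe: "PE (bord AX bX cX) (bord AY bY cY)" by (rule PE_bord[OF 1(1,3,2)]) (use c1 in auto)
  have r: "Rep (- w') (- w)" by (rule Rep_intro[OF pe PE_erow PE_ecol KX KY])
  have "Rep w' w" using Rep_neg[OF r] by simp
  thus ?thesis using w' by blast
qed

lemma Rep_closure: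
  assumes "Rep u v" shows "u \<in> rat_closure d embA X" "v \<in> rat_closure d embB Y"
proof -
  obtain n AX AY cX cY bX bY NX NY where 1: "PE AX AY" "PE cX cY" "PE bX bY"
     "side n AX cX bX NX u" "side n AY cY bY NY v" using assms unfolding Rep_def by blast
  note c1 = side_carriers[OF 1(4)]
  note d1 = side_dims[OF 1(4)]
  have pe: "PE (cvt AX bX cX n) (cvt AY bY cY n)"
    unfolding cvt_def
    apply (rule PE_fb[where ra=1 and ca=1 and rb="n+1" and cb="n+1", OF PE_one _ PE_zero])
        apply (rule PE_fb[where ra=1 and ca=n and rb=0 and cb=1, OF 1(2) PE_zero PE_zero PE_zero]; use d1 in simp)
       apply (rule PE_fb[where ra=n and ca=n and rb=1 and cb=1, OF 1(1) 1(3) PE_zero PE_one]; use d1 in simp)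
    using d1 by simp_all
  then obtain W where W: "is_poly_mat d W" "cvt AX bX cX n = mat_eval embA X W" "cvt AY bY cY n = mat_eval embB Y W"
    unfolding PE_def by blast
  obtain KX where KX: "minv (1 + (n+1)) (cvt AX bX cX n) KX" "KX $$ (0, n+1) = u" using side_cvt[OF 1(4)] by blast
  obtain KY where KY: "minv (1 + (n+1)) (cvt AY bY cY n) KY" "KY $$ (0, n+1) = v" using side_cvt[OF 1(5)] by blast
  show "u \<in> rat_closure d embA X" using rat_closure_intro[OF W(1) KX(1)[unfolded W(2)], of 0 "n+1"] KX(2) by simp
  show "v \<in> rat_closure d embB Y" using rat_closure_intro[OF W(1) KY(1)[unfolded W(3)], of 0 "n+1"] KY(2) by simp
qed

lemma Rep_entry:
  assumes A: "is_poly_mat d A" "A \<in> carrier_mat n n" and M: "minv n (mat_eval embB Y A) M"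
  shows "\<exists>N. minv n (mat_eval embA X A) N \<and> (\<forall>i<n. \<forall>j<n. Rep (N $$ (i,j)) (M $$ (i,j)))"
proof -
  have "rkB (mat_eval embB Y A) = real n" using rk_minv[OF srB M] .
  hence ge: "rkA (mat_eval embA X A) \<ge> real n" using hyp[OF A(1)] by simp
  have AX: "mat_eval embA X A \<in> carrier_mat n n" using A(2) unfolding carrier_mat_def by simp
  have "rkA (mat_eval embA X A) \<le> real n" using rk_le_rows[OF srA AX] .
  hence "rkA (mat_eval embA X A) = real n" using ge by simp
  hence "invertible_mat (mat_eval embA X A)" by (rule regularD[OF reA AX])
  then obtain N where N: "minv n (mat_eval embA X A) N" using invertible_minv[OF AX] by blast
  have pe: "PE (mat_eval embA X A) (mat_eval embB Y A)" unfolding PE_def using A(1) by blast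
  have "\<forall>i<n. \<forall>j<n. Rep (N $$ (i,j)) (M $$ (i,j))"
    using Rep_intro[OF pe PE_erow PE_ecol side_entry[OF N] side_entry[OF M]] by blast
  thus ?thesis using N by blast
qed

end




lemma sub_zero: "subalgebra emb S \<Longrightarrow> complex_alg emb \<Longrightarrow> 0 \<in> S"
  unfolding subalgebra_def using emb_facts(1)[of emb] by (metis mult_zero_left)

lemma sub_sum:
  assumes S: "subalgebra emb S" "complex_alg emb" and K: "finite K" and g: "\<And>k. k \<in> K \<Longrightarrow> g k \<in> S"
  shows "sum g K \<in> S"
  using K g
proof (induction K rule: finite_induct)
  case empty thus ?case using sub_zero[OF S] by simp
next
  case (insert x F)
  thus ?case using S(1) unfolding subalgebra_def by simp
qed

lemma hom_zero:
  assumes S: "subalgebra embA S" "complex_alg embA" and f: "alg_hom_on embA embB S f"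
  shows "f 0 = 0"
proof -
  have z: "(0::'a) \<in> S" by (rule sub_zero[OF S])
  have "f (0 + 0) = f 0 + f 0" using f z unfolding alg_hom_on_def by blast
  thus ?thesis by simp
qed

lemma hom_sum:
  assumes S: "subalgebra embA S" "complex_alg embA" and f: "alg_hom_on embA embB S f"
    and K: "finite K" and g: "\<And>k. k \<in> K \<Longrightarrow> g k \<in> S"
  shows "f (sum g K) = (\<Sum>k\<in>K. f (g k))"
  using K g
proof (induction K rule: finite_induct)
  case empty thus ?case using hom_zero[OF S f] by simp
next
  case (insert x F)
  have "sum g F \<in> S" by (rule sub_sum[OF S]) (use insert in auto)
  moreover have "g x \<in> S" using insert by auto
  ultimately have "f (g x + sum g F) = f (g x) + f (sum g F)" using f unfolding alg_hom_on_def by blast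
  thus ?case using insert by simp
qed

lemma entries_mult:
  assumes S: "subalgebra emb S" "complex_alg emb" and P: "entries_in S P" and Q: "entries_in S Q"
    and d: "dim_col P = dim_row Q"
  shows "entries_in S (P * Q)"
  unfolding entries_in_def
proof (intro allI impI)
  fix i j assume ij: "i < dim_row (P * Q)" "j < dim_col (P * Q)"
  have "(P * Q) $$ (i,j) = (\<Sum>k\<in>{0..<dim_col P}. P $$ (i,k) * Q $$ (k,j))"
    using ij d by (auto simp: scalar_prod_def)
  also have "\<dots> \<in> S"
  proof (rule sub_sum[OF S])
    fix k assume k: "k \<in> {0..<dim_col P}"
    have "P $$ (i,k) \<in> S" using P ij k unfolding entries_in_def by auto
    moreover have "Q $$ (k,j) \<in> S" using Q ij k d unfolding entries_in_def by auto
    ultimately show "P $$ (i,k) * Q $$ (k,j) \<in> S" using S(1) unfolding subalgebra_def by blast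
  qed simp
  finally show "(P * Q) $$ (i,j) \<in> S" .
qed

lemma map_mult:
  assumes S: "subalgebra embA S" "complex_alg embA" and f: "alg_hom_on embA embB S f"
    and P: "entries_in S P" and Q: "entries_in S Q" and d: "dim_col P = dim_row Q"
  shows "map_mat f (P * Q) = map_mat f P * map_mat f Q"
proof (rule eq_matI)
  fix i j assume ij: "i < dim_row (map_mat f P * map_mat f Q)" "j < dim_col (map_mat f P * map_mat f Q)"
  have "map_mat f (P * Q) $$ (i,j) = f (\<Sum>k\<in>{0..<dim_col P}. P $$ (i,k) * Q $$ (k,j))"
    using ij d by (auto simp: scalar_prod_def)
  also have "\<dots> = (\<Sum>k\<in>{0..<dim_col P}. f (P $$ (i,k) * Q $$ (k,j)))"
  proof (rule hom_sum[OF S f])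
    fix k assume k: "k \<in> {0..<dim_col P}"
    have "P $$ (i,k) \<in> S" using P ij k unfolding entries_in_def by auto
    moreover have "Q $$ (k,j) \<in> S" using Q ij k d unfolding entries_in_def by auto
    ultimately show "P $$ (i,k) * Q $$ (k,j) \<in> S" using S(1) unfolding subalgebra_def by blast
  qed simp
  also have "\<dots> = (\<Sum>k\<in>{0..<dim_col P}. f (P $$ (i,k)) * f (Q $$ (k,j)))"
  proof (rule sum.cong)
    fix k assume k: "k \<in> {0..<dim_col P}"
    have "P $$ (i,k) \<in> S" using P ij k unfolding entries_in_def by auto
    moreover have "Q $$ (k,j) \<in> S" using Q ij k d unfolding entries_in_def by auto
    ultimately show "f (P $$ (i,k) * Q $$ (k,j)) = f (P $$ (i,k)) * f (Q $$ (k,j))"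
      using f unfolding alg_hom_on_def by blast
  qed simp
  also have "\<dots> = (map_mat f P * map_mat f Q) $$ (i,j)"
    using ij d by (auto simp: scalar_prod_def)
  finally show "map_mat f (P * Q) $$ (i,j) = (map_mat f P * map_mat f Q) $$ (i,j)" .
qed auto

lemma entries_in_mat_eval:
  assumes "is_poly_mat d A" "\<And>p. is_poly d p \<Longrightarrow> peval emb Z p \<in> S"
  shows "entries_in S (mat_eval emb Z A)"
  using assms unfolding entries_in_def is_poly_mat_def by auto

lemma map_mat_eval:
  assumes "is_poly_mat d A" "\<And>p. is_poly d p \<Longrightarrow> f (peval embA X p) = peval embB Y p"
  shows "map_mat f (mat_eval embA X A) = mat_eval embB Y A"
  by (rule eq_matI) (use assms in \<open>auto simp: is_poly_mat_def\<close>)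

context spec_setup
begin

lemma Rep_const: "Rep (embA c) (embB c)"
  using Rep_poly[of "PConst c"] by (simp add: is_poly_def)

lemma Rep_one: "Rep 1 1"
  using Rep_const[of 1] eA(2) eB(2) by simp

lemma Rep_var: "i < d \<Longrightarrow> Rep (X i) (Y i)"
  using Rep_poly[of "PVar i"] by (simp add: is_poly_def)

definition U0 :: "'a set" where "U0 = {u. \<exists>v. Rep u v}"
definition f0 :: "'a \<Rightarrow> 'b" where "f0 u = (SOME v. Rep u v)"

lemma f0_eq: "Rep u v \<Longrightarrow> f0 u = v"
  unfolding f0_def by (metis someI Rep_unique)

lemma Rep_f0: "u \<in> U0 \<Longrightarrow> Rep u (f0 u)"
  unfolding U0_def using f0_eq by auto

lemma U0_subalg: "subalgebra embA U0"
  unfolding subalgebra_def U0_def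
  using Rep_one Rep_add Rep_mult Rep_const by blast

lemma inv_in_minv: "inv_in S M \<Longrightarrow> \<exists>n N. minv n M N \<and> entries_in S N"
  unfolding inv_in_def minv_def by blast

lemma subhom_U0: "subhom d embA X embB Y U0 f0"
  unfolding subhom_def
proof (intro conjI)
  show "subalgebra embA U0" by (rule U0_subalg)
  show "U0 \<subseteq> rat_closure d embA X" unfolding U0_def using Rep_closure(1) by blast
  show "\<forall>p. is_poly d p \<longrightarrow> peval embA X p \<in> U0" unfolding U0_def using Rep_poly by blast
  show "alg_hom_on embA embB U0 f0" unfolding alg_hom_on_def
  proof (intro conjI ballI allI)
    show "f0 1 = 1" by (rule f0_eq[OF Rep_one])
    fix a b assume ab: "a \<in> U0" "b \<in> U0"
    show "f0 (a + b) = f0 a + f0 b" by (rule f0_eq[OF Rep_add[OF Rep_f0 Rep_f0]]) (use ab in auto)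
    show "f0 (a * b) = f0 a * f0 b" by (rule f0_eq[OF Rep_mult[OF Rep_f0 Rep_f0]]) (use ab in auto)
  next
    fix c a assume a: "a \<in> U0"
    show "f0 (embA c * a) = embB c * f0 a" by (rule f0_eq[OF Rep_mult[OF Rep_const Rep_f0[OF a]]])
  qed
  show "f0 ` U0 \<subseteq> rat_closure d embB Y" using Rep_f0 Rep_closure(2) by blast
  show "\<forall>p. is_poly d p \<longrightarrow> f0 (peval embA X p) = peval embB Y p" using Rep_poly f0_eq by blast
  show "Sigma d embB Y (rat_closure d embB Y) \<subseteq> Sigma d embA X U0"
  proof
    fix A assume A: "A \<in> Sigma d embB Y (rat_closure d embB Y)"
    hence A1: "is_poly_mat d A" "square_mat A" "inv_in (rat_closure d embB Y) (mat_eval embB Y A)"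
      unfolding Sigma_def by auto
    obtain n M where M: "minv n (mat_eval embB Y A) M" using inv_in_minv[OF A1(3)] by blast
    have Ac: "A \<in> carrier_mat n n" using M unfolding minv_def carrier_mat_def by simp
    obtain N where N: "minv n (mat_eval embA X A) N" "\<forall>i<n. \<forall>j<n. Rep (N $$ (i,j)) (M $$ (i,j))"
      using Rep_entry[OF A1(1) Ac M] by blast
    have "entries_in U0 N" using N unfolding entries_in_def U0_def minv_def by auto
    hence "inv_in U0 (mat_eval embA X A)" using N(1) unfolding inv_in_def minv_def by blast
    thus "A \<in> Sigma d embA X U0" unfolding Sigma_def using A1 by blast
  qed
qed

lemma subhom_Rep:
  assumes sh: "subhom d embA X embB Y S f" and R: "Rep u v"
  shows "u \<in> S \<and> f u = v"
proof -
  have S: "subalgebra embA S" "complex_alg embA" using sh algA unfolding subhom_def by auto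
  have f: "alg_hom_on embA embB S f" using sh unfolding subhom_def by auto
  have polyS: "\<And>p. is_poly d p \<Longrightarrow> peval embA X p \<in> S" using sh unfolding subhom_def by auto
  have polyf: "\<And>p. is_poly d p \<Longrightarrow> f (peval embA X p) = peval embB Y p" using sh unfolding subhom_def by auto
  have Sig: "Sigma d embB Y (rat_closure d embB Y) \<subseteq> Sigma d embA X S" using sh unfolding subhom_def by auto
  obtain n AX AY cX cY bX bY NX NY where 1: "PE AX AY" "PE cX cY" "PE bX bY"
     "side n AX cX bX NX u" "side n AY cY bY NY v" using R unfolding Rep_def by blast
  obtain A where A: "is_poly_mat d A" "AX = mat_eval embA X A" "AY = mat_eval embB Y A" using 1(1) unfolding PE_def by blast
  obtain C where C: "is_poly_mat d C" "cX = mat_eval embA X C" "cY = mat_eval embB Y C" using 1(2) unfolding PE_def by blast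
  obtain B where B: "is_poly_mat d B" "bX = mat_eval embA X B" "bY = mat_eval embB Y B" using 1(3) unfolding PE_def by blast
  have sX: "minv n AX NX" "cX \<in> carrier_mat 1 n" "bX \<in> carrier_mat n 1" "mat1 u = cX * NX * bX"
    using 1(4) unfolding side_def by auto
  have sY: "minv n AY NY" "cY \<in> carrier_mat 1 n" "bY \<in> carrier_mat n 1" "mat1 v = cY * NY * bY"
    using 1(5) unfolding side_def by auto
  have Ac: "A \<in> carrier_mat n n" using sX(1) A(2) unfolding minv_def carrier_mat_def by simp
  have "entries_in (rat_closure d embB Y) NY"
    unfolding entries_in_def
  proof (intro allI impI)
    fix i j assume ij: "i < dim_row NY" "j < dim_col NY"
    have "NY \<in> carrier_mat n n" using sY(1) unfolding minv_def by auto
    thus "NY $$ (i,j) \<in> rat_closure d embB Y"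
      using rat_closure_intro[OF A(1) sY(1)[unfolded A(3)]] ij by auto
  qed
  hence "inv_in (rat_closure d embB Y) AY" using sY(1) unfolding inv_in_def minv_def by blast
  hence "A \<in> Sigma d embB Y (rat_closure d embB Y)" unfolding Sigma_def using A Ac by (auto simp: A(3))
  hence "A \<in> Sigma d embA X S" using Sig by blast
  hence "inv_in S AX" unfolding Sigma_def A(2) by auto
  then obtain m N' where N': "AX \<in> carrier_mat m m" "N' \<in> carrier_mat m m" "entries_in S N'" "AX * N' = 1\<^sub>m m"
    unfolding inv_in_def by blast
  have m: "m = n" using N'(1) sX(1) unfolding minv_def carrier_mat_def by auto
  have "N' = NX" using minv_unique[OF sX(1)] N' m by auto
  hence eN: "entries_in S NX" using N'(3) by simp
  have eC: "entries_in S cX" unfolding C(2) by (rule entries_in_mat_eval[OF C(1) polyS])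
  have eB: "entries_in S bX" unfolding B(2) by (rule entries_in_mat_eval[OF B(1) polyS])
  have dims: "dim_col cX = dim_row NX" "dim_col NX = dim_row bX" "dim_col AX = dim_row NX"
    using sX unfolding minv_def by auto
  have eCN: "entries_in S (cX * NX)" by (rule entries_mult[OF S eC eN dims(1)])
  have eCNB: "entries_in S (cX * NX * bX)" by (rule entries_mult[OF S eCN eB]) (use dims in simp)
  have uS: "u \<in> S" using eCNB unfolding sX(4)[symmetric] entries_in_def by auto
  have mA: "map_mat f AX = AY" unfolding A(2,3) by (rule map_mat_eval[OF A(1) polyf])
  have mC: "map_mat f cX = cY" unfolding C(2,3) by (rule map_mat_eval[OF C(1) polyf])
  have mB: "map_mat f bX = bY" unfolding B(2,3) by (rule map_mat_eval[OF B(1) polyf])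
  have eA': "entries_in S AX" unfolding A(2) by (rule entries_in_mat_eval[OF A(1) polyS])
  have f1: "f 1 = 1" using f unfolding alg_hom_on_def by blast
  have f0': "f 0 = 0" by (rule hom_zero[OF S f])
  have "map_mat f (AX * NX) = AY * map_mat f NX" using map_mult[OF S f eA' eN dims(3)] mA by simp
  moreover have "map_mat f (AX * NX) = 1\<^sub>m n" using sX(1) f1 f0' unfolding minv_def
    by (intro eq_matI) auto
  ultimately have "AY * map_mat f NX = 1\<^sub>m n" by simp
  hence mN: "map_mat f NX = NY" using minv_unique[OF sY(1)] sX(1) unfolding minv_def by auto
  have e1: "map_mat f (mat1 u) = mat1 v"
    unfolding sX(4) sY(4)
    using map_mult[OF S f eCN eB] map_mult[OF S f eC eN dims(1)] mC mN mB dims by simp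
  have e2: "map_mat f (mat1 u) = mat1 (f u)" unfolding mat1_def by (rule eq_matI) auto
  have "mat1 (f u) = mat1 v" using e2 e1 by (rule trans[OF sym])
  hence "f u = v" unfolding mat1_eq_iff .
  thus ?thesis using uS by simp
qed

lemma subhom_cong:
  assumes sh: "subhom d embA X embB Y U f" and eq: "\<And>u. u \<in> U \<Longrightarrow> g u = f u"
  shows "subhom d embA X embB Y U g"
proof -
  have sa: "subalgebra embA U" and r1: "U \<subseteq> rat_closure d embA X"
    and poly: "\<forall>p. is_poly d p \<longrightarrow> peval embA X p \<in> U"
    and fh: "alg_hom_on embA embB U f" and r2: "f ` U \<subseteq> rat_closure d embB Y"
    and pf: "\<forall>p. is_poly d p \<longrightarrow> f (peval embA X p) = peval embB Y p"
    and sg: "Sigma d embB Y (rat_closure d embB Y) \<subseteq> Sigma d embA X U"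
    using sh unfolding subhom_def by blast+
  have one: "1 \<in> U" using sa unfolding subalgebra_def by blast
  have cl1: "\<And>a b. a \<in> U \<Longrightarrow> b \<in> U \<Longrightarrow> a + b \<in> U" and cl2: "\<And>a b. a \<in> U \<Longrightarrow> b \<in> U \<Longrightarrow> a * b \<in> U"
    and cl3: "\<And>c a. a \<in> U \<Longrightarrow> embA c * a \<in> U"
    using sa unfolding subalgebra_def by blast+
  have f1: "f 1 = 1" and fa: "\<And>a b. a \<in> U \<Longrightarrow> b \<in> U \<Longrightarrow> f (a + b) = f a + f b"
    and fm: "\<And>a b. a \<in> U \<Longrightarrow> b \<in> U \<Longrightarrow> f (a * b) = f a * f b"
    and fs: "\<And>c a. a \<in> U \<Longrightarrow> f (embA c * a) = embB c * f a"
    using fh unfolding alg_hom_on_def by blast+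
  have gh: "alg_hom_on embA embB U g" unfolding alg_hom_on_def
  proof (intro conjI ballI allI)
    show "g 1 = 1" using eq[OF one] f1 by simp
    fix a b assume ab: "a \<in> U" "b \<in> U"
    show "g (a + b) = g a + g b" using eq[OF cl1[OF ab]] eq[OF ab(1)] eq[OF ab(2)] fa[OF ab] by simp
    show "g (a * b) = g a * g b" using eq[OF cl2[OF ab]] eq[OF ab(1)] eq[OF ab(2)] fm[OF ab] by simp
  next
    fix c a assume a: "a \<in> U"
    show "g (embA c * a) = embB c * g a" using eq[OF cl3[OF a]] eq[OF a] fs[OF a] by simp
  qed
  have "g ` U = f ` U" using eq by (auto simp: image_def)
  hence r2': "g ` U \<subseteq> rat_closure d embB Y" using r2 by simp
  have pg: "\<forall>p. is_poly d p \<longrightarrow> g (peval embA X p) = peval embB Y p" using pf poly eq by simp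
  show ?thesis unfolding subhom_def using sa r1 poly gh r2' pg sg by blast
qed

lemma uniq_spec: "unique_specialization d embA X embB Y"
  unfolding unique_specialization_def
proof (intro conjI allI impI)
  show "\<exists>S f. subhom d embA X embB Y S f" using subhom_U0 by blast
  fix S f T g assume sS: "subhom d embA X embB Y S f" and sT: "subhom d embA X embB Y T g"
  have fU: "\<And>u. u \<in> U0 \<Longrightarrow> f u = f0 u \<and> u \<in> S" using subhom_Rep[OF sS Rep_f0] by blast
  have gU: "\<And>u. u \<in> U0 \<Longrightarrow> g u = f0 u \<and> u \<in> T" using subhom_Rep[OF sT Rep_f0] by blast
  have "subhom d embA X embB Y U0 f" by (rule subhom_cong[OF subhom_U0]) (use fU in auto)
  thus "subhom_equiv d embA X embB Y S f T g" unfolding subhom_equiv_def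
    using fU gU by (intro exI[of _ U0]) auto
qed

lemma two_sided_inv_unique:
  fixes a :: "'c::ring_1"
  assumes "a * x = 1" "x * a = 1" "a * y = 1" "y * a = 1"
  shows "x = y"
proof -
  have "x = x * (a * y)" using assms by simp
  also have "\<dots> = (x * a) * y" by (simp add: mult.assoc)
  finally show ?thesis using assms by simp
qed

lemma reval_Rep:
  "rvars R \<subseteq> {..<d} \<Longrightarrow> reval embB Y R = Some b \<Longrightarrow> \<exists>a. reval embA X R = Some a \<and> Rep a b"
proof (induction R arbitrary: b)
  case (RConst c) thus ?case using Rep_const by auto
next
  case (RVar i) thus ?case using Rep_var by auto
next
  case (RAdd p q)
  obtain b1 b2 where b: "reval embB Y p = Some b1" "reval embB Y q = Some b2" "b = b1 + b2"
    using RAdd.prems(2) by (auto split: option.splits)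
  obtain a1 where a1: "reval embA X p = Some a1" "Rep a1 b1" using RAdd.IH(1)[OF _ b(1)] RAdd.prems(1) by auto
  obtain a2 where a2: "reval embA X q = Some a2" "Rep a2 b2" using RAdd.IH(2)[OF _ b(2)] RAdd.prems(1) by auto
  show ?case using a1 a2 b Rep_add by auto
next
  case (RMul p q)
  obtain b1 b2 where b: "reval embB Y p = Some b1" "reval embB Y q = Some b2" "b = b1 * b2"
    using RMul.prems(2) by (auto split: option.splits)
  obtain a1 where a1: "reval embA X p = Some a1" "Rep a1 b1" using RMul.IH(1)[OF _ b(1)] RMul.prems(1) by auto
  obtain a2 where a2: "reval embA X q = Some a2" "Rep a2 b2" using RMul.IH(2)[OF _ b(2)] RMul.prems(1) by auto
  show ?case using a1 a2 b Rep_mult by auto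
next
  case (RInv p)
  obtain b1 where b1: "reval embB Y p = Some b1" and ex: "\<exists>c. b1 * c = 1 \<and> c * b1 = 1"
    and b: "b = (THE c. b1 * c = 1 \<and> c * b1 = 1)"
    using RInv.prems(2) by (auto split: option.splits if_splits)
  obtain c where c: "b1 * c = 1" "c * b1 = 1" using ex by blast
  have bc: "b = c" unfolding b
    by (rule the_equality) (use c two_sided_inv_unique in blast)+
  obtain a1 where a1: "reval embA X p = Some a1" "Rep a1 b1" using RInv.IH[OF _ b1] RInv.prems(1) by auto
  obtain w where w: "a1 * w = 1" "w * a1 = 1" "Rep w c" using Rep_inv[OF a1(2) c] by blast
  have "(THE x. a1 * x = 1 \<and> x * a1 = 1) = w"
    by (rule the_equality) (use w two_sided_inv_unique in blast)+
  hence "reval embA X (RInv p) = Some w" using a1(1) w by auto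
  thus ?case using w bc by auto
qed

lemma main: "unique_specialization d embA X embB Y \<and>
    (\<forall>R b. rvars R \<subseteq> {..<d} \<longrightarrow> reval embB Y R = Some b \<longrightarrow>
       (\<exists>a. reval embA X R = Some a \<and> rkB (mat1 b) \<le> rkA (mat1 a)))"
  using uniq_spec reval_Rep Rep_rank by blast

end



theorem proposition2p21:
  fixes embA :: "complex \<Rightarrow> 'a::ring_1" and embB :: "complex \<Rightarrow> 'b::ring_1"
    and rkA :: "'a mat \<Rightarrow> real" and rkB :: "'b mat \<Rightarrow> real"
    and d :: nat and X :: "nat \<Rightarrow> 'a" and Y :: "nat \<Rightarrow> 'b"
  assumes "complex_alg embA" and "complex_alg embB"
    and "sylvester_rank rkA" and "faithful_rank rkA" and "regular_rank rkA"
    and "sylvester_rank rkB" and "faithful_rank rkB" and "regular_rank rkB"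
    and "\<And>A. is_poly_mat d A \<Longrightarrow> rkB (mat_eval embB Y A) \<le> rkA (mat_eval embA X A)"
  shows "unique_specialization d embA X embB Y \<and>
    (\<forall>R b. rvars R \<subseteq> {..<d} \<longrightarrow> reval embB Y R = Some b \<longrightarrow>
       (\<exists>a. reval embA X R = Some a \<and> rkB (mat1 b) \<le> rkA (mat1 a)))"
proof -
  interpret spec_setup d embA X embB Y rkA rkB
    by (rule spec_setup.intro[OF assms])
  show ?thesis by (rule main)
qed

end
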